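(* Let $m,n>2$ be integers and $\Gamma={\rm SR}(m,n)$. If $n>3$, then the automorphism group of $\Gamma$ is the group ${\rm Sym}(m)$ acting by permuting coordinate positions. If $n=3$, then ${\rm Aut}(\Gamma)\cong{\rm Sym}(m).2$, namely it is generated by the coordinate permutations together with the involution that interchanges the digits $1$ and $2$ in each vertex having a coordinate equal to $2$ (i.e. maps $2e_i+e_j$ to $e_i+2e_j$ and fixes all other vertices), and it has order $2\cdot m!$.
   Context: ${\rm SR}(m,n)$ is the graph whose vertices are the vectors in $\{0,1,2,\dots\}^m$ with coordinate sum $n$, two vertices being adjacent when they differ in precisely two coordinate positions. $e_i$ denotes the $i$-th standard unit vector. *)

theory Defs
  imports Main "HOL-Algebra.Bij" "HOL-Algebra.Generated_Groups" "HOL-Combinatorics.Permutations"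
begin

text \<open>Vertices of SR(m,n): vectors in {0,1,2,...}^m (coordinates indexed by 0..m-1,
  represented as functions nat => nat vanishing from m on) with coordinate sum n.\<close>
definition SR_verts :: "nat \<Rightarrow> nat \<Rightarrow> (nat \<Rightarrow> nat) set" where
  "SR_verts m n = {x. (\<forall>i\<ge>m. x i = 0) \<and> (\<Sum>i<m. x i) = n}"

definition SR_adj :: "nat \<Rightarrow> (nat \<Rightarrow> nat) \<Rightarrow> (nat \<Rightarrow> nat) \<Rightarrow> bool" where
  "SR_adj m x y \<longleftrightarrow> card {i. i < m \<and> x i \<noteq> y i} = 2"

definition SR_Aut :: "nat \<Rightarrow> nat \<Rightarrow> ((nat \<Rightarrow> nat) \<Rightarrow> (nat \<Rightarrow> nat)) set" where
  "SR_Aut m n = {f \<in> Bij (SR_verts m n).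
     \<forall>x\<in>SR_verts m n. \<forall>y\<in>SR_verts m n. SR_adj m (f x) (f y) \<longleftrightarrow> SR_adj m x y}"

definition coord_perm :: "nat \<Rightarrow> nat \<Rightarrow> (nat \<Rightarrow> nat) \<Rightarrow> ((nat \<Rightarrow> nat) \<Rightarrow> (nat \<Rightarrow> nat))" where
  "coord_perm m n \<sigma> = (\<lambda>x\<in>SR_verts m n. (\<lambda>i. x (inv_into UNIV \<sigma> i)))"

definition coord_perms :: "nat \<Rightarrow> nat \<Rightarrow> ((nat \<Rightarrow> nat) \<Rightarrow> (nat \<Rightarrow> nat)) set" where
  "coord_perms m n = {coord_perm m n \<sigma> | \<sigma>. \<sigma> permutes {..<m}}"

definition swap12 :: "nat \<Rightarrow> nat \<Rightarrow> ((nat \<Rightarrow> nat) \<Rightarrow> (nat \<Rightarrow> nat))" where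
  "swap12 m n = (\<lambda>x\<in>SR_verts m n.
     if (\<exists>i. x i = 2) then (\<lambda>k. if x k = 1 then 2 else if x k = 2 then 1 else x k) else x)"

end

theory Submission
  imports Defs
begin

lemma sum_split2:
  fixes x :: "nat \<Rightarrow> nat"
  assumes "a < m" "b < m" "a \<noteq> b"
  shows "(\<Sum>i<m. x i) = x a + x b + (\<Sum>i\<in>{..<m} - {a,b}. x i)"
proof -
  have "(\<Sum>i<m. x i) = x a + (\<Sum>i\<in>{..<m} - {a}. x i)"
    using assms by (simp add: sum.remove)
  also have "(\<Sum>i\<in>{..<m} - {a}. x i) = x b + (\<Sum>i\<in>{..<m} - {a} - {b}. x i)"
    using assms by (subst sum.remove[of _ b]) auto
  finally show ?thesis by (simp add: insert_commute set_diff_eq) 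
qed

lemma SR_verts_iff: "x \<in> SR_verts m n \<longleftrightarrow> (\<forall>i\<ge>m. x i = 0) \<and> (\<Sum>i<m. x i) = n"
  by (simp add: SR_verts_def)

lemma adj_iff: "SR_adj m x y \<longleftrightarrow> (\<exists>a b. a < m \<and> b < m \<and> a \<noteq> b \<and> x a \<noteq> y a \<and> x b \<noteq> y b \<and>
     (\<forall>i<m. i \<noteq> a \<longrightarrow> i \<noteq> b \<longrightarrow> x i = y i))" (is "?L \<longleftrightarrow> ?R")
proof
  assume "?L"
  then have "card {i. i < m \<and> x i \<noteq> y i} = 2" unfolding SR_adj_def .
  then obtain a b where ab: "{i. i < m \<and> x i \<noteq> y i} = {a,b}" "a \<noteq> b"
    unfolding card_2_iff by blast
  have a: "a < m \<and> x a \<noteq> y a" using ab(1) by (metis (mono_tags, lifting) insertI1 mem_Collect_eq)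
  have b: "b < m \<and> x b \<noteq> y b" using ab(1) by (metis (mono_tags, lifting) insertI1 insert_commute mem_Collect_eq)
  have c: "\<forall>i<m. i \<noteq> a \<longrightarrow> i \<noteq> b \<longrightarrow> x i = y i"
  proof (intro allI impI)
    fix i assume "i < m" "i \<noteq> a" "i \<noteq> b"
    then have "i \<notin> {a,b}" by simp
    then show "x i = y i" using \<open>i < m\<close> ab(1) by blast
  qed
  show ?R using a b c ab(2) by blast
next
  assume ?R
  then obtain a b where h: "a < m" "b < m" "a \<noteq> b" "x a \<noteq> y a" "x b \<noteq> y b"
     "\<forall>i<m. i \<noteq> a \<longrightarrow> i \<noteq> b \<longrightarrow> x i = y i" by blast
  then have "{i. i < m \<and> x i \<noteq> y i} = {a,b}" by auto
  then show ?L using \<open>a \<noteq> b\<close> unfolding SR_adj_def by simp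
qed

lemma adjI: "a < m \<Longrightarrow> b < m \<Longrightarrow> a \<noteq> b \<Longrightarrow> x a \<noteq> y a \<Longrightarrow> x b \<noteq> y b \<Longrightarrow>
     (\<And>i. i<m \<Longrightarrow> i \<noteq> a \<Longrightarrow> i \<noteq> b \<Longrightarrow> x i = y i) \<Longrightarrow> SR_adj m x y"
  unfolding adj_iff by blast

lemma adjE: assumes "SR_adj m x y"
  obtains a b where "a < m" "b < m" "a \<noteq> b" "x a \<noteq> y a" "x b \<noteq> y b"
     "\<And>i. i<m \<Longrightarrow> i \<noteq> a \<Longrightarrow> i \<noteq> b \<Longrightarrow> x i = y i"
  using assms unfolding adj_iff by blast

lemma not_adj3: "SR_adj m x y \<Longrightarrow> a < m \<Longrightarrow> b < m \<Longrightarrow> c < m \<Longrightarrow> a \<noteq> b \<Longrightarrow> a \<noteq> c \<Longrightarrow> b \<noteq> c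
   \<Longrightarrow> x a \<noteq> y a \<Longrightarrow> x b \<noteq> y b \<Longrightarrow> x c \<noteq> y c \<Longrightarrow> False"
proof (erule adjE)
  fix p q assume h: "p < m" "q < m" "p \<noteq> q" "x p \<noteq> y p" "x q \<noteq> y q"
     "\<And>i. i<m \<Longrightarrow> i \<noteq> p \<Longrightarrow> i \<noteq> q \<Longrightarrow> x i = y i"
  assume "a < m" "b < m" "c < m" "a \<noteq> b" "a \<noteq> c" "b \<noteq> c" "x a \<noteq> y a" "x b \<noteq> y b" "x c \<noteq> y c"
  then have "a = p \<or> a = q" "b = p \<or> b = q" "c = p \<or> c = q" using h(6) by blast+
  then show False using \<open>a \<noteq> b\<close> \<open>a \<noteq> c\<close> \<open>b \<noteq> c\<close> by auto
qed

lemma adj_sym: "SR_adj m x y \<Longrightarrow> SR_adj m y x"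
proof -
  have "{i. i < m \<and> y i \<noteq> x i} = {i. i < m \<and> x i \<noteq> y i}" by auto
  then show "SR_adj m x y \<Longrightarrow> SR_adj m y x" unfolding SR_adj_def by simp
qed

lemma adj_neq: "SR_adj m x y \<Longrightarrow> x \<noteq> y"
  by (erule adjE) auto

lemma vert_sum2:
  assumes "x \<in> SR_verts m n" "y \<in> SR_verts m n" "a < m" "b < m" "a \<noteq> b"
    "\<And>i. i<m \<Longrightarrow> i \<noteq> a \<Longrightarrow> i \<noteq> b \<Longrightarrow> x i = y i"
  shows "x a + x b = y a + y b"
proof -
  have "(\<Sum>i\<in>{..<m} - {a,b}. x i) = (\<Sum>i\<in>{..<m} - {a,b}. y i)"
    using assms(6) by (intro sum.cong) auto
  then show ?thesis using assms(1-5) sum_split2[OF assms(3-5), of x] sum_split2[OF assms(3-5), of y]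
    by (simp add: SR_verts_iff)
qed

lemma vert_upd2:
  assumes "x \<in> SR_verts m n" "a < m" "b < m" "a \<noteq> b" "x a + x b = a' + b'"
  shows "x(a := a', b := b') \<in> SR_verts m n"
proof -
  let ?y = "x(a := a', b := b')"
  have "(\<Sum>i\<in>{..<m} - {a,b}. ?y i) = (\<Sum>i\<in>{..<m} - {a,b}. x i)"
    by (intro sum.cong) auto
  then show ?thesis using assms sum_split2[OF assms(2-4), of x] sum_split2[OF assms(2-4), of ?y]
    by (auto simp add: SR_verts_iff)
qed

lemma vert_eqI:
  assumes "x \<in> SR_verts m n" "y \<in> SR_verts m n" "\<And>i. i < m \<Longrightarrow> x i = y i"
  shows "x = y"
proof
  fix i show "x i = y i" using assms by (cases "i < m") (auto simp: SR_verts_iff)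
qed


locale SR =
  fixes m n :: nat
  assumes m3: "2 < m" and n3: "2 < n"
begin

abbreviation "V \<equiv> SR_verts m n"
abbreviation "adj \<equiv> SR_adj m"

definition cor :: "nat \<Rightarrow> nat \<Rightarrow> nat" where
  "cor i = (\<lambda>k. if k = i then n else 0)"

definition P :: "nat \<Rightarrow> nat \<Rightarrow> nat \<Rightarrow> nat \<Rightarrow> nat" where
  "P i j u = (\<lambda>k. if k = i then u else if k = j then n - u else 0)"

lemma cor_V: "i < m \<Longrightarrow> cor i \<in> V"
  by (simp add: SR_verts_iff cor_def)

lemma cor_inj: "cor i = cor j \<Longrightarrow> i = j"
  using n3 unfolding cor_def by (metis (mono_tags) less_nat_zero_code zero_less_iff_neq_zero)

lemma P_alt: "i \<noteq> j \<Longrightarrow> P i j u = (cor i)(i := u, j := n - u)"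
  by (auto simp: P_def cor_def)

lemma P_V: "i < m \<Longrightarrow> j < m \<Longrightarrow> i \<noteq> j \<Longrightarrow> u \<le> n \<Longrightarrow> P i j u \<in> V"
  unfolding P_alt by (rule vert_upd2[OF cor_V]) (auto simp: cor_def)

lemma P_app: "P i j u i = u" "i \<noteq> j \<Longrightarrow> P i j u j = n - u" "k \<noteq> i \<Longrightarrow> k \<noteq> j \<Longrightarrow> P i j u k = 0"
  by (auto simp: P_def)

lemma cor_app: "cor i i = n" "k \<noteq> i \<Longrightarrow> cor i k = 0"
  by (auto simp: cor_def)

lemma P_swap: "i \<noteq> j \<Longrightarrow> u \<le> n \<Longrightarrow> P j i (n - u) = P i j u"
  by (auto simp: P_def)

lemma P_n: "P i j n = cor i"
  by (auto simp: P_def cor_def)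

lemma P_0: "i \<noteq> j \<Longrightarrow> P i j 0 = cor j"
  by (auto simp: P_def cor_def)

lemma ex_third: "a < m \<Longrightarrow> b < m \<Longrightarrow> \<exists>k<m. k \<noteq> a \<and> k \<noteq> b"
  using m3 by (metis One_nat_def less_2_cases_iff less_trans_Suc nat_neq_iff numeral_2_eq_2 zero_less_Suc)

lemma nbr_cor:
  assumes i: "i < m" and w: "w \<in> V" and a: "adj (cor i) w"
  shows "\<exists>l u. l < m \<and> l \<noteq> i \<and> u < n \<and> w = P i l u"
proof -
  obtain a b where h: "a < m" "b < m" "a \<noteq> b" "cor i a \<noteq> w a" "cor i b \<noteq> w b"
     "\<And>t. t<m \<Longrightarrow> t \<noteq> a \<Longrightarrow> t \<noteq> b \<Longrightarrow> cor i t = w t"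
    using a by (rule adjE) blast
  have s: "cor i a + cor i b = w a + w b" by (rule vert_sum2[OF cor_V[OF i] w h(1-3) h(6)])
  have "i = a \<or> i = b"
  proof (rule ccontr)
    assume "\<not> (i = a \<or> i = b)"
    then have "cor i a = 0" "cor i b = 0" by (auto simp: cor_def)
    then show False using s h(4) by simp
  qed
  then obtain l where l: "l < m" "l \<noteq> i" "cor i i \<noteq> w i" "cor i l \<noteq> w l"
     "\<And>t. t<m \<Longrightarrow> t \<noteq> i \<Longrightarrow> t \<noteq> l \<Longrightarrow> cor i t = w t" and s2: "cor i i + cor i l = w i + w l"
    using h s by (metis add.commute)
  have wi: "w i < n" "w l = n - w i" using l(2,3) s2 by (auto simp: cor_def)
  have "w = P i l (w i)"
  proof
    fix t show "w t = P i l (w i) t"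
    proof (cases "t < m")
      case True then show ?thesis using l(5)[of t] wi by (auto simp: P_def cor_def)
    next
      case False
      then show ?thesis using w l(1) i by (auto simp: P_def SR_verts_iff)
    qed
  qed
  then show ?thesis using l wi by blast
qed

lemma P_adj:
  assumes "i < m" "j < m" "l < m" "j \<noteq> i" "l \<noteq> i" "u < n" "v < n"
  shows "adj (P i j u) (P i l v) \<longleftrightarrow> (j = l \<and> u \<noteq> v) \<or> (j \<noteq> l \<and> u = v)"
proof
  assume A: "adj (P i j u) (P i l v)"
  show "(j = l \<and> u \<noteq> v) \<or> (j \<noteq> l \<and> u = v)"
  proof (rule ccontr)
    assume "\<not> ?thesis"
    then have "(j = l \<and> u = v) \<or> (j \<noteq> l \<and> u \<noteq> v)" by blast
    then show False
    proof
      assume "j = l \<and> u = v" then show False using A adj_neq by blast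
    next
      assume B: "j \<noteq> l \<and> u \<noteq> v"
      show False
        by (rule not_adj3[OF A, of i j l]) (use assms B in \<open>auto simp: P_def\<close>)
    qed
  qed
next
  assume "(j = l \<and> u \<noteq> v) \<or> (j \<noteq> l \<and> u = v)"
  then show "adj (P i j u) (P i l v)"
  proof
    assume B: "j = l \<and> u \<noteq> v"
    show ?thesis by (rule adjI[where a=i and b=j]) (use assms B in \<open>auto simp: P_def\<close>)
  next
    assume B: "j \<noteq> l \<and> u = v"
    show ?thesis by (rule adjI[where a=j and b=l]) (use assms B in \<open>auto simp: P_def\<close>)
  qed
qed

end

context SR begin

definition R :: "(nat \<Rightarrow> nat) \<Rightarrow> bool" where
  "R x \<longleftrightarrow> (\<forall>y\<in>V. \<forall>z\<in>V. adj x y \<longrightarrow> adj x z \<longrightarrow> y \<noteq> z \<longrightarrow> \<not> adj y z \<longrightarrow>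
      card {w\<in>V. adj x w \<and> adj y w \<and> adj z w} = 2)"

lemma R_cor: assumes i: "i < m" shows "R (cor i)"
  unfolding R_def
proof (intro ballI impI)
  fix y z assume yV: "y \<in> V" and zV: "z \<in> V" and ay: "adj (cor i) y" and az: "adj (cor i) z"
    and yz: "y \<noteq> z" and nyz: "\<not> adj y z"
  obtain j u where j: "j < m" "j \<noteq> i" "u < n" "y = P i j u" using nbr_cor[OF i yV ay] by blast
  obtain l v where l: "l < m" "l \<noteq> i" "v < n" "z = P i l v" using nbr_cor[OF i zV az] by blast
  have jl: "j \<noteq> l" "u \<noteq> v" using nyz yz P_adj[OF i j(1) l(1) j(2) l(2) j(3) l(3)] j(4) l(4) by auto
  have S: "{w\<in>V. adj (cor i) w \<and> adj y w \<and> adj z w} = {P i j v, P i l u}"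
  proof (intro equalityI subsetI)
      fix w
      assume "w \<in> {w\<in>V. adj (cor i) w \<and> adj y w \<and> adj z w}"
      then have w: "w \<in> V" "adj (cor i) w" "adj y w" "adj z w" by auto
      obtain t s where t: "t < m" "t \<noteq> i" "s < n" "w = P i t s" using nbr_cor[OF i w(1,2)] by blast
      have 1: "(j = t \<and> u \<noteq> s) \<or> (j \<noteq> t \<and> u = s)"
        using w(3) P_adj[OF i j(1) t(1) j(2) t(2) j(3) t(3)] j(4) t(4) by simp
      have 2: "(l = t \<and> v \<noteq> s) \<or> (l \<noteq> t \<and> v = s)"
        using w(4) P_adj[OF i l(1) t(1) l(2) t(2) l(3) t(3)] l(4) t(4) by simp
      show "w \<in> {P i j v, P i l u}" using 1 2 t(4) jl by auto
    next
      fix w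
      assume "w \<in> {P i j v, P i l u}"
      then show "w \<in> {w\<in>V. adj (cor i) w \<and> adj y w \<and> adj z w}"
      proof
        assume w: "w = P i j v"
        have "adj (cor i) w" unfolding w
          by (rule adjI[where a=i and b=j]) (use i j l n3 in \<open>auto simp: P_def cor_def\<close>)
        moreover have "adj y w" using P_adj[OF i j(1) j(1) j(2) j(2) j(3) l(3)] jl j(4) w by simp
        moreover have "adj z w" using P_adj[OF i l(1) j(1) l(2) j(2) l(3) l(3)] jl l(4) w by simp
        moreover have "w \<in> V" using w P_V[OF i j(1)] j l by simp
        ultimately show ?thesis by simp
      next
        assume "w \<in> {P i l u}"
        then have w: "w = P i l u" by simp
        have "adj (cor i) w" unfolding w
          by (rule adjI[where a=i and b=l]) (use i j l n3 in \<open>auto simp: P_def cor_def\<close>)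
        moreover have "adj y w" using P_adj[OF i j(1) l(1) j(2) l(2) j(3) j(3)] jl j(4) w by simp
        moreover have "adj z w" using P_adj[OF i l(1) l(1) l(2) l(2) l(3) j(3)] jl l(4) w by simp
        moreover have "w \<in> V" using w P_V[OF i l(1)] j l by simp
        ultimately show ?thesis by simp
      qed
  qed
  have "P i j v \<noteq> P i l u"
  proof
    assume "P i j v = P i l u"
    then have "P i j v j = P i l u j" by simp
    then show False using jl j l by (simp add: P_def)
  qed
  then show "card {w\<in>V. adj (cor i) w \<and> adj y w \<and> adj z w} = 2" unfolding S by simp
qed

end

context SR begin

lemma notR_card3:
  assumes "y \<in> V" "z \<in> V" "adj x y" "adj x z" "y \<noteq> z" "\<not> adj y z"
    and "w1 \<in> V" "w2 \<in> V" "w3 \<in> V"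
    and "adj x w1" "adj y w1" "adj z w1" "adj x w2" "adj y w2" "adj z w2" "adj x w3" "adj y w3" "adj z w3"
    and "w1 \<noteq> w2" "w1 \<noteq> w3" "w2 \<noteq> w3"
  shows "\<not> R x"
proof
  assume "R x"
  then have c: "card {w\<in>V. adj x w \<and> adj y w \<and> adj z w} = 2" using assms(1-6) unfolding R_def by blast
  then have f: "finite {w\<in>V. adj x w \<and> adj y w \<and> adj z w}" by (metis card.infinite zero_neq_numeral)
  have sub: "{w1,w2,w3} \<subseteq> {w\<in>V. adj x w \<and> adj y w \<and> adj z w}" using assms by auto
  have "card {w1,w2,w3} = 3" using assms(19-21) by simp
  then show False using card_mono[OF f sub] c by simp
qed

lemma notR_A:
  assumes x: "x \<in> V" and pqk: "p < m" "q < m" "k < m" "p \<noteq> q" "p \<noteq> k" "q \<noteq> k"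
    and nz: "x p \<noteq> 0" "x q \<noteq> 0" "x k \<noteq> 0"
  shows "\<not> R x"
proof -
  define y where "y = x(p := x p - 1, k := x k + 1)"
  define z where "z = x(q := x q - 1, p := x p + 1)"
  define w1 where "w1 = x(p := x p - 1, q := x q + 1)"
  define w2 where "w2 = x(q := x q - 1, k := x k + 1)"
  define w3 where "w3 = x(k := x k - 1, p := x p + 1)"
  have V: "y \<in> V" "z \<in> V" "w1 \<in> V" "w2 \<in> V" "w3 \<in> V"
    unfolding y_def z_def w1_def w2_def w3_def using pqk nz
    by (auto intro!: vert_upd2[OF x])
  note ds = pqk(4-6) pqk(4-6)[symmetric]
  show ?thesis
  proof (rule notR_card3[OF V(1,2) _ _ _ _ V(3-5)])
    show "adj x y" unfolding y_def by (rule adjI[where a=p and b=k]) (use pqk nz in auto)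
    show "adj x z" unfolding z_def by (rule adjI[where a=q and b=p]) (use pqk nz in auto)
    show "y \<noteq> z" proof assume "y = z" then have "y p = z p" by simp then show False using ds by (simp add: y_def z_def) qed
    show "\<not> adj y z" proof assume a: "adj y z" show False by (rule not_adj3[OF a, of p q k]) (use pqk nz in \<open>auto simp: y_def z_def\<close>) qed
    show "adj x w1" unfolding w1_def by (rule adjI[where a=p and b=q]) (use pqk nz in auto)
    show "adj y w1" unfolding y_def w1_def by (rule adjI[where a=q and b=k]) (use pqk nz in auto)
    show "adj z w1" unfolding z_def w1_def by (rule adjI[where a=p and b=q]) (use pqk nz in auto)
    show "adj x w2" unfolding w2_def by (rule adjI[where a=q and b=k]) (use pqk nz in auto)
    show "adj y w2" unfolding y_def w2_def by (rule adjI[where a=p and b=q]) (use pqk nz in auto)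
    show "adj z w2" unfolding z_def w2_def by (rule adjI[where a=p and b=k]) (use pqk nz in auto)
    show "adj x w3" unfolding w3_def by (rule adjI[where a=p and b=k]) (use pqk nz in auto)
    show "adj y w3" unfolding y_def w3_def by (rule adjI[where a=p and b=k]) (use pqk nz in auto)
    show "adj z w3" unfolding z_def w3_def by (rule adjI[where a=q and b=k]) (use pqk nz in auto)
    show "w1 \<noteq> w2" proof assume "w1 = w2" then have "w1 p = w2 p" by simp then show False using ds nz by (simp add: w1_def w2_def) qed
    show "w1 \<noteq> w3" proof assume "w1 = w3" then have "w1 q = w3 q" by simp then show False using ds nz by (simp add: w1_def w3_def) qed
    show "w2 \<noteq> w3" proof assume "w2 = w3" then have "w2 q = w3 q" by simp then show False using ds nz by (simp add: w2_def w3_def) qed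
  qed
qed

end

lemma adj_other:
  assumes "SR_adj m x w" "p < m" "x p \<noteq> w p"
  shows "\<exists>b<m. b \<noteq> p \<and> x b \<noteq> w b \<and> (\<forall>t<m. t \<noteq> p \<longrightarrow> t \<noteq> b \<longrightarrow> x t = w t)"
  using assms(1)
proof (rule adjE)
  fix a b assume h: "a < m" "b < m" "a \<noteq> b" "x a \<noteq> w a" "x b \<noteq> w b"
     "\<And>i. i<m \<Longrightarrow> i \<noteq> a \<Longrightarrow> i \<noteq> b \<Longrightarrow> x i = w i"
  then have "p = a \<or> p = b" using assms(2,3) by blast
  then show ?thesis using h by blast
qed

context SR begin

lemma notR_B:
  assumes x: "x \<in> V" and pqk: "p < m" "q < m" "k < m" "p \<noteq> q" "p \<noteq> k" "q \<noteq> k"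
    and xp: "2 \<le> x p" and xq: "1 \<le> x q" and z0: "\<And>t. t < m \<Longrightarrow> t \<noteq> p \<Longrightarrow> t \<noteq> q \<Longrightarrow> x t = 0"
  shows "\<not> R x"
proof
  assume R: "R x"
  have "x p + x q = cor q p + cor q q"
    by (rule vert_sum2[OF x cor_V[OF pqk(2)] pqk(1,2,4)]) (use z0 in \<open>auto simp: cor_def\<close>)
  then have xpq: "x p + x q = n" using pqk by (simp add: cor_def)
  have xk: "x k = 0" using z0 pqk by simp
  define y where "y = x(p := 0, k := x p)"
  define z where "z = x(p := x p + 1, q := x q - 1)"
  have yV: "y \<in> V" unfolding y_def using pqk xk by (auto intro!: vert_upd2[OF x])
  have zV: "z \<in> V" unfolding z_def using pqk xq by (auto intro!: vert_upd2[OF x])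
  note ds = pqk(4-6) pqk(4-6)[symmetric]
  have axy: "adj x y" unfolding y_def by (rule adjI[where a=p and b=k]) (use pqk xp xk in auto)
  have axz: "adj x z" unfolding z_def by (rule adjI[where a=p and b=q]) (use pqk xq in auto)
  have yz: "y \<noteq> z" proof assume "y = z" then have "y p = z p" by simp then show False using ds by (simp add: y_def z_def) qed
  have nyz: "\<not> adj y z" proof assume a: "adj y z" show False by (rule not_adj3[OF a, of p q k]) (use pqk xp xq xk in \<open>auto simp: y_def z_def\<close>) qed
  have sub: "{w\<in>V. adj x w \<and> adj y w \<and> adj z w} \<subseteq> {cor q}"
  proof
    fix w assume "w \<in> {w\<in>V. adj x w \<and> adj y w \<and> adj z w}"
    then have w: "w \<in> V" "adj x w" "adj y w" "adj z w" by auto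
    show "w \<in> {cor q}"
    proof (cases "x p = w p")
      case True
      note wp = True
      show ?thesis
      proof (cases "x q = w q")
        case True
        obtain a b where h: "a < m" "b < m" "a \<noteq> b" "x a \<noteq> w a" "x b \<noteq> w b"
          "\<And>i. i<m \<Longrightarrow> i \<noteq> a \<Longrightarrow> i \<noteq> b \<Longrightarrow> x i = w i" using w(2) by (rule adjE) blast
        have "a \<noteq> p" "a \<noteq> q" "b \<noteq> p" "b \<noteq> q" using h wp True by auto
        then have "x a = 0" "x b = 0" using z0 h by auto
        moreover have "x a + x b = w a + w b" by (rule vert_sum2[OF x w(1) h(1-3) h(6)])
        ultimately show ?thesis using h(4) by simp
      next
        case False
        obtain b where b: "b < m" "b \<noteq> q" "x b \<noteq> w b" "\<forall>t<m. t \<noteq> q \<longrightarrow> t \<noteq> b \<longrightarrow> x t = w t"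
          using adj_other[OF w(2) pqk(2) False] by blast
        have bp: "b \<noteq> p" using b wp by auto
        have s: "x q + x b = w q + w b" by (rule vert_sum2[OF x w(1) pqk(2) b(1) b(2)[symmetric]]) (use b in auto)
        have xb: "x b = 0" using z0 b bp by auto
        show ?thesis
        proof (cases "b = k")
          case False
          have "w k = 0" using b(4) pqk False xk by auto
          then show ?thesis using not_adj3[OF w(3), of p q k] pqk xp wp False \<open>x q \<noteq> w q\<close>
            by (auto simp: y_def)
        next
          case True
          have wk: "w k \<noteq> 0" using b xb True by auto
          have "w q = x q - 1"
          proof (rule ccontr)
            assume "w q \<noteq> x q - 1"
            then show False using not_adj3[OF w(4), of p q k] pqk wp wk xk by (auto simp: z_def)
          qed
          then have "w k = 1" using s xb True xq by auto
          then show ?thesis using not_adj3[OF w(3), of p q k] pqk xp wp \<open>x q \<noteq> w q\<close>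
            by (auto simp: y_def)
        qed
      qed
    next
      case False
      note wp = False
      obtain b where b: "b < m" "b \<noteq> p" "x b \<noteq> w b" "\<forall>t<m. t \<noteq> p \<longrightarrow> t \<noteq> b \<longrightarrow> x t = w t"
        using adj_other[OF w(2) pqk(1) False] by blast
      have s: "x p + x b = w p + w b" by (rule vert_sum2[OF x w(1) pqk(1) b(1) b(2)[symmetric]]) (use b in auto)
      show ?thesis
      proof (cases "b = q")
        case True
        have wo: "\<And>t. t < m \<Longrightarrow> t \<noteq> p \<Longrightarrow> t \<noteq> q \<Longrightarrow> w t = 0" using b True z0 by fastforce
        have "w p = 0"
        proof (rule ccontr)
          assume "w p \<noteq> 0"
          then show False using not_adj3[OF w(3), of k q p] pqk xp wo[of k] b(3) True
            by (auto simp: y_def)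
        qed
        then have wqn: "w q = n" using s True xpq by simp
        have "w = cor q"
        proof (rule vert_eqI[OF w(1) cor_V[OF pqk(2)]])
          fix i assume "i < m"
          then show "w i = cor q i" using wo[of i] wqn \<open>w p = 0\<close> pqk(4) by (cases "i = q"; cases "i = p") (auto simp: cor_def)
        qed
        then show ?thesis by simp
      next
        case False
        have wq: "w q = x q" using b False pqk by auto
        have xb: "x b = 0" using z0 b False by auto
        have "w p < x p" using s xb b(3) by auto
        then have 1: "z p \<noteq> w p" using pqk(4) by (simp add: z_def)
        have 2: "z q \<noteq> w q" using wq xq by (simp add: z_def)
        have 3: "z b \<noteq> w b" using b(2,3) False xb by (simp add: z_def)
        show ?thesis by (rule FalseE, rule not_adj3[OF w(4) pqk(1,2) b(1) pqk(4) b(2)[symmetric] False[symmetric] 1 2 3])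
      qed
    qed
  qed
  have "card {w\<in>V. adj x w \<and> adj y w \<and> adj z w} = 2" using R yV zV axy axz yz nyz unfolding R_def by blast
  then show False using card_mono[OF _ sub] by simp
qed

end

context SR begin

lemma noncor_two:
  assumes x: "x \<in> V" and nc: "\<forall>i<m. x \<noteq> cor i"
  shows "\<exists>p q. p < m \<and> q < m \<and> p \<noteq> q \<and> x p \<noteq> 0 \<and> x q \<noteq> 0"
proof -
  have s: "(\<Sum>i<m. x i) = n" using x by (simp add: SR_verts_iff)
  have "\<exists>p<m. x p \<noteq> 0"
  proof (rule ccontr)
    assume "\<not> ?thesis"
    then have "(\<Sum>i<m. x i) = 0" by simp
    then show False using s n3 by simp
  qed
  then obtain p where p: "p < m" "x p \<noteq> 0" by blast
  have "\<exists>q<m. q \<noteq> p \<and> x q \<noteq> 0"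
  proof (rule ccontr)
    assume "\<not> ?thesis"
    then have z: "\<And>q. q < m \<Longrightarrow> q \<noteq> p \<Longrightarrow> x q = 0" by blast
    have "(\<Sum>i<m. x i) = x p + (\<Sum>i\<in>{..<m} - {p}. x i)" using p by (simp add: sum.remove)
    also have "(\<Sum>i\<in>{..<m} - {p}. x i) = 0" using z by (intro sum.neutral) auto
    finally have "x p = n" using s by simp
    then have "x = cor p" using z by (intro vert_eqI[OF x cor_V[OF p(1)]]) (auto simp: cor_def)
    then show False using nc p by blast
  qed
  then show ?thesis using p by blast
qed

lemma notR:
  assumes x: "x \<in> V" and nc: "\<forall>i<m. x \<noteq> cor i"
  shows "\<not> R x"
proof -
  obtain p q where pq: "p < m" "q < m" "p \<noteq> q" "x p \<noteq> 0" "x q \<noteq> 0" using noncor_two[OF x nc] by blast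
  show ?thesis
  proof (cases "\<exists>k<m. k \<noteq> p \<and> k \<noteq> q \<and> x k \<noteq> 0")
    case True
    then obtain k where "k < m" "k \<noteq> p" "k \<noteq> q" "x k \<noteq> 0" by blast
    then show ?thesis using notR_A[OF x pq(1,2) \<open>k < m\<close> pq(3)] pq by auto
  next
    case False
    then have z0: "\<And>t. t < m \<Longrightarrow> t \<noteq> p \<Longrightarrow> t \<noteq> q \<Longrightarrow> x t = 0" by blast
    have "x p + x q = cor q p + cor q q"
      by (rule vert_sum2[OF x cor_V[OF pq(2)] pq(1,2,3)]) (use z0 in \<open>auto simp: cor_def\<close>)
    then have xpq: "x p + x q = n" using pq by (simp add: cor_def)
    obtain k where k: "k < m" "k \<noteq> p" "k \<noteq> q" using ex_third[OF pq(1,2)] by blast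
    show ?thesis
    proof (cases "2 \<le> x p")
      case True
      then show ?thesis using notR_B[OF x pq(1,2) k(1) pq(3) k(2)[symmetric] k(3)[symmetric] True] pq z0 by auto
    next
      case False
      then have "2 \<le> x q" using xpq n3 by auto
      then show ?thesis using notR_B[OF x pq(2,1) k(1) pq(3)[symmetric] k(3)[symmetric] k(2)[symmetric]] pq z0 by auto
    qed
  qed
qed

lemma aut_bij: "f \<in> SR_Aut m n \<Longrightarrow> bij_betw f V V"
  by (simp add: SR_Aut_def Bij_def)

lemma aut_V: "f \<in> SR_Aut m n \<Longrightarrow> x \<in> V \<Longrightarrow> f x \<in> V"
  using aut_bij bij_betwE by blast

lemma aut_adj: "f \<in> SR_Aut m n \<Longrightarrow> x \<in> V \<Longrightarrow> y \<in> V \<Longrightarrow> adj (f x) (f y) \<longleftrightarrow> adj x y"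
  by (simp add: SR_Aut_def)

lemma aut_inj: "f \<in> SR_Aut m n \<Longrightarrow> x \<in> V \<Longrightarrow> y \<in> V \<Longrightarrow> f x = f y \<longleftrightarrow> x = y"
  using aut_bij by (metis bij_betw_iff_bijections)

lemma aut_surj: "f \<in> SR_Aut m n \<Longrightarrow> y \<in> V \<Longrightarrow> \<exists>x\<in>V. y = f x"
  using aut_bij by (metis bij_betw_iff_bijections)

lemma R_aut:
  assumes f: "f \<in> SR_Aut m n" and x: "x \<in> V" and R: "R x"
  shows "R (f x)"
  unfolding R_def
proof (intro ballI impI)
  fix y' z' assume y'V: "y' \<in> V" and z'V: "z' \<in> V" and a1: "adj (f x) y'" and a2: "adj (f x) z'"
    and ne: "y' \<noteq> z'" and na: "\<not> adj y' z'"
  obtain y where y: "y \<in> V" "y' = f y" using aut_surj[OF f y'V] by blast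
  obtain z where z: "z \<in> V" "z' = f z" using aut_surj[OF f z'V] by blast
  have c: "card {w\<in>V. adj x w \<and> adj y w \<and> adj z w} = 2"
    using R y z a1 a2 ne na aut_adj[OF f] x unfolding R_def by auto
  have im: "{w\<in>V. adj (f x) w \<and> adj y' w \<and> adj z' w} = f ` {w\<in>V. adj x w \<and> adj y w \<and> adj z w}"
  proof (intro equalityI subsetI)
    fix w assume "w \<in> {w\<in>V. adj (f x) w \<and> adj y' w \<and> adj z' w}"
    then have w: "w \<in> V" "adj (f x) w" "adj y' w" "adj z' w" by auto
    obtain w0 where w0: "w0 \<in> V" "w = f w0" using aut_surj[OF f w(1)] by blast
    show "w \<in> f ` {w\<in>V. adj x w \<and> adj y w \<and> adj z w}"
      using w w0 y z x aut_adj[OF f] by auto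
  next
    fix w assume "w \<in> f ` {w\<in>V. adj x w \<and> adj y w \<and> adj z w}"
    then obtain w0 where w0: "w0 \<in> V" "adj x w0" "adj y w0" "adj z w0" "w = f w0" by auto
    show "w \<in> {w\<in>V. adj (f x) w \<and> adj y' w \<and> adj z' w}"
      using w0 y z x aut_adj[OF f] aut_V[OF f] by auto
  qed
  have "inj_on f {w\<in>V. adj x w \<and> adj y w \<and> adj z w}"
    using aut_inj[OF f] by (auto simp: inj_on_def)
  then show "card {w\<in>V. adj (f x) w \<and> adj y' w \<and> adj z' w} = 2"
    unfolding im using c by (simp add: card_image)
qed

lemma cor_aut:
  assumes f: "f \<in> SR_Aut m n" and i: "i < m"
  shows "\<exists>j<m. f (cor i) = cor j"
proof (rule ccontr)
  assume "\<not> ?thesis"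
  then have "\<forall>j<m. f (cor i) \<noteq> cor j" by blast
  then have "\<not> R (f (cor i))" using notR aut_V[OF f cor_V[OF i]] by blast
  then show False using R_aut[OF f cor_V[OF i] R_cor[OF i]] by blast
qed

end

context SR begin

lemma P_adj_cor1: "i < m \<Longrightarrow> j < m \<Longrightarrow> i \<noteq> j \<Longrightarrow> 0 < u \<Longrightarrow> u < n \<Longrightarrow> adj (cor i) (P i j u)"
  by (rule adjI[where a=i and b=j]) (auto simp: P_def cor_def)

lemma P_adj_cor2: "i < m \<Longrightarrow> j < m \<Longrightarrow> i \<noteq> j \<Longrightarrow> 0 < u \<Longrightarrow> u < n \<Longrightarrow> adj (cor j) (P i j u)"
  by (rule adjI[where a=i and b=j]) (auto simp: P_def cor_def)

lemma P_not_cor: "i < m \<Longrightarrow> j < m \<Longrightarrow> i \<noteq> j \<Longrightarrow> 0 < u \<Longrightarrow> u < n \<Longrightarrow> P i j u \<noteq> cor k"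
proof
  assume h: "i < m" "j < m" "i \<noteq> j" "0 < u" "u < n" and e: "P i j u = cor k"
  have "P i j u i = cor k i" "P i j u j = cor k j" using e by auto
  then show False using h by (auto simp: P_def cor_def split: if_splits)
qed

lemma P_inj: "i \<noteq> j \<Longrightarrow> P i j u = P i j v \<Longrightarrow> u = v"
  by (metis P_app(1))

lemma P_img:
  assumes g: "g \<in> SR_Aut m n" and gc: "\<forall>i<m. g (cor i) = cor i"
    and ij: "i < m" "j < m" "i \<noteq> j" and u: "0 < u" "u < n"
  shows "\<exists>v. 0 < v \<and> v < n \<and> g (P i j u) = P i j v"
proof -
  have PV: "P i j u \<in> V" using P_V ij u by simp
  let ?w = "g (P i j u)"
  have wV: "?w \<in> V" using aut_V[OF g PV] .
  have a1: "adj (cor i) ?w" using aut_adj[OF g cor_V[OF ij(1)] PV] gc ij P_adj_cor1[OF ij u] by simp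
  have a2: "adj (cor j) ?w" using aut_adj[OF g cor_V[OF ij(2)] PV] gc ij P_adj_cor2[OF ij u] by simp
  have nc: "\<And>k. k < m \<Longrightarrow> ?w \<noteq> cor k"
  proof
    fix k assume k: "k < m" and e: "?w = cor k"
    then have "g (P i j u) = g (cor k)" using gc by simp
    then have "P i j u = cor k" using aut_inj[OF g PV cor_V[OF k]] by simp
    then show False using P_not_cor ij u by blast
  qed
  obtain l v where lv: "l < m" "l \<noteq> i" "v < n" "?w = P i l v" using nbr_cor[OF ij(1) wV a1] by blast
  have v0: "v \<noteq> 0" using nc[OF lv(1)] lv(2,4) P_0 by metis
  have "l = j"
  proof (rule ccontr)
    assume lj: "l \<noteq> j"
    show False
      by (rule not_adj3[OF a2, of i j l]) (use ij lv lj v0 n3 in \<open>auto simp: cor_def P_def\<close>)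
  qed
  then show ?thesis using lv v0 by auto
qed

lemma inv_aut:
  assumes g: "g \<in> SR_Aut m n"
  shows "restrict (inv_into V g) V \<in> SR_Aut m n"
proof -
  let ?h = "restrict (inv_into V g) V"
  have B: "?h \<in> Bij V" using g by (intro restrict_inv_into_Bij) (simp add: SR_Aut_def)
  have hV: "\<And>x. x \<in> V \<Longrightarrow> ?h x \<in> V" using B Bij_imp_funcset by blast
  have gh: "\<And>x. x \<in> V \<Longrightarrow> g (?h x) = x" using aut_bij[OF g]
    by (simp add: bij_betw_inv_into_right)
  have "\<forall>x\<in>V. \<forall>y\<in>V. adj (?h x) (?h y) \<longleftrightarrow> adj x y"
  proof (intro ballI)
    fix x y assume "x \<in> V" "y \<in> V"
    then show "adj (?h x) (?h y) \<longleftrightarrow> adj x y"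
      using aut_adj[OF g hV hV, of x y] gh by simp
  qed
  then show ?thesis using B by (simp add: SR_Aut_def)
qed

lemma inv_aut_cor:
  assumes g: "g \<in> SR_Aut m n" and gc: "\<forall>i<m. g (cor i) = cor i"
  shows "\<forall>i<m. restrict (inv_into V g) V (cor i) = cor i"
proof (intro allI impI)
  fix i assume i: "i < m"
  have "inv_into V g (g (cor i)) = cor i"
    using aut_bij[OF g] cor_V[OF i] by (simp add: bij_betw_def inv_into_f_f)
  then show "restrict (inv_into V g) V (cor i) = cor i" using gc i cor_V[OF i] by simp
qed

end

context SR begin

definition sup2 :: "(nat \<Rightarrow> nat) \<Rightarrow> nat \<Rightarrow> nat \<Rightarrow> bool" where
  "sup2 x i j \<longleftrightarrow> (\<forall>t<m. t \<noteq> i \<longrightarrow> t \<noteq> j \<longrightarrow> x t = 0)"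

lemma sup2_form:
  assumes w: "w \<in> V" and s: "sup2 w i j" and ij: "i < m" "j < m" "i \<noteq> j"
  shows "w = P i j (w i)" "w i \<le> n"
proof -
  have "w i + w j = cor j i + cor j j"
    by (rule vert_sum2[OF w cor_V[OF ij(2)] ij]) (use s in \<open>auto simp: cor_def sup2_def\<close>)
  then have e: "w i + w j = n" using ij by (simp add: cor_def)
  show "w i \<le> n" using e by simp
  show "w = P i j (w i)"
  proof (rule vert_eqI[OF w P_V[OF ij]])
    show "w i \<le> n" using e by simp
    fix t assume "t < m" then show "w t = P i j (w i) t" using s e by (auto simp: P_def sup2_def)
  qed
qed

end

locale SRg = SR +
  fixes g
  assumes g_aut: "g \<in> SR_Aut m n" and g_cor: "\<forall>i<m. g (cor i) = cor i"
begin

definition psi :: "nat \<Rightarrow> nat \<Rightarrow> nat \<Rightarrow> nat" where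
  "psi i j u = (SOME v. 0 < v \<and> v < n \<and> g (P i j u) = P i j v)"

lemma psi:
  assumes "i < m" "j < m" "i \<noteq> j" "0 < u" "u < n"
  shows "0 < psi i j u \<and> psi i j u < n \<and> g (P i j u) = P i j (psi i j u)"
  unfolding psi_def by (rule someI_ex[OF P_img[OF g_aut g_cor assms]])

lemma psi_rule1:
  assumes "i < m" "j < m" "k < m" "i \<noteq> j" "i \<noteq> k" "j \<noteq> k" "0 < u" "u < n"
  shows "psi i j u = psi i k u"
proof -
  have a: "adj (P i j u) (P i k u)" using P_adj[of i j k u u] assms by simp
  have V1: "P i j u \<in> V" "P i k u \<in> V" using P_V assms by auto
  have "adj (g (P i j u)) (g (P i k u))" using aut_adj[OF g_aut V1] a by simp
  then have "adj (P i j (psi i j u)) (P i k (psi i k u))"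
    using psi[of i j u] psi[of i k u] assms by simp
  then show ?thesis using P_adj[of i j k "psi i j u" "psi i k u"] psi[of i j u] psi[of i k u] assms by auto
qed

lemma psi_rule2:
  assumes "i < m" "j < m" "i \<noteq> j" "0 < u" "u < n"
  shows "psi j i (n - u) = n - psi i j u"
proof -
  have e: "P j i (n - u) = P i j u" using P_swap assms by simp
  have 1: "g (P j i (n - u)) = P j i (psi j i (n - u))" using psi[of j i "n - u"] assms by simp
  have 2: "g (P i j u) = P i j (psi i j u)" using psi[of i j u] assms by simp
  have "P i j (psi i j u) = P j i (n - psi i j u)" using P_swap[of i j "psi i j u"] psi[of i j u] assms by simp
  then have "P j i (psi j i (n - u)) = P j i (n - psi i j u)" using 1 2 e by simp
  then show ?thesis by (rule P_inj[rotated]) (use assms in simp)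
qed

lemma psi_rule3:
  assumes "i < m" "j < m" "k < m" "i \<noteq> j" "i \<noteq> k" "j \<noteq> k" "0 < u" "u < n"
  shows "psi i j u = psi k j u"
proof -
  have 1: "psi j i (n - u) = n - psi i j u" using psi_rule2[of i j u] assms by simp
  have 2: "psi j k (n - u) = n - psi k j u" using psi_rule2[of k j u] assms by simp
  have 3: "psi j i (n - u) = psi j k (n - u)" using psi_rule1[of j i k "n - u"] assms by simp
  have "psi i j u < n" "psi k j u < n" using psi[of i j u] psi[of k j u] assms by auto
  then show ?thesis using 1 2 3 by simp
qed

lemma psi_01:
  assumes ij: "i < m" "j < m" "i \<noteq> j" and u: "0 < u" "u < n"
  shows "psi i j u = psi 0 1 u"
proof -
  have m1: "0 < m" "1 < m" using m3 by auto
  have A: "\<And>j. j < m \<Longrightarrow> j \<noteq> 0 \<Longrightarrow> psi 0 j u = psi 0 1 u"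
  proof -
    fix j assume "j < m" "j \<noteq> 0"
    then show "psi 0 j u = psi 0 1 u"
    proof (cases "j = 1")
      case False
      then show ?thesis using psi_rule1[of 0 j 1 u] m1 u \<open>j < m\<close> \<open>j \<noteq> 0\<close> by simp
    qed simp
  qed
  show ?thesis
  proof (cases "i = 0")
    case True then show ?thesis using A[of j] ij by simp
  next
    case False
    show ?thesis
    proof (cases "j = 0")
      case False
      have "psi i j u = psi 0 j u" using psi_rule3[of i j 0 u] ij u m1 \<open>i \<noteq> 0\<close> False by simp
      then show ?thesis using A[of j] ij False by simp
    next
      case True
      obtain k where k: "k < m" "k \<noteq> i" "k \<noteq> 0" using ex_third[OF ij(1) m1(1)] by blast
      have "psi i 0 u = psi i k u" using psi_rule1[of i 0 k u] k ij u m1 \<open>i \<noteq> 0\<close> by simp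
      also have "\<dots> = psi 0 k u" using psi_rule3[of i k 0 u] k ij u m1 \<open>i \<noteq> 0\<close> by simp
      also have "\<dots> = psi 0 1 u" using A[of k] k by simp
      finally show ?thesis using True by simp
    qed
  qed
qed

definition phi :: "nat \<Rightarrow> nat" where "phi u = psi 0 1 u"

lemma gP:
  assumes "i < m" "j < m" "i \<noteq> j" "0 < u" "u < n"
  shows "g (P i j u) = P i j (phi u)" "0 < phi u" "phi u < n"
  using psi[OF assms] psi_01[OF assms] unfolding phi_def by auto

lemma phi_inj:
  assumes "0 < u" "u < n" "0 < v" "v < n" "phi u = phi v"
  shows "u = v"
proof -
  have m1: "0 < m" "1 < m" "(0::nat) \<noteq> 1" using m3 by auto
  have e1: "g (P 0 1 u) = P 0 1 (phi u)" using gP(1)[OF m1 assms(1,2)] .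
  have e2: "g (P 0 1 v) = P 0 1 (phi v)" using gP(1)[OF m1 assms(3,4)] .
  have "g (P 0 1 u) = g (P 0 1 v)" using e1 e2 assms(5) by simp
  moreover have "P 0 1 u \<in> V" "P 0 1 v \<in> V" using P_V[OF m1] assms by auto
  ultimately have "P 0 1 u = P 0 1 v" using aut_inj[OF g_aut] by blast
  then show ?thesis using P_inj[OF m1(3)] by blast
qed

lemma sup2_back:
  assumes x: "x \<in> V" and ij: "i < m" "j < m" "i \<noteq> j" and s: "sup2 (g x) i j"
  shows "sup2 x i j"
proof -
  let ?y = "g x"
  have yV: "?y \<in> V" using aut_V[OF g_aut x] .
  have yf: "?y = P i j (?y i)" "?y i \<le> n" using sup2_form[OF yV s ij] by auto
  show ?thesis
  proof (cases "?y i = 0")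
    case True
    have "?y = P i j 0" using yf(1) True by (simp only:)
    then have "?y = g (cor j)" using g_cor ij P_0[of i j] by simp
    then have "x = cor j" using aut_inj[OF g_aut x cor_V[OF ij(2)]] by simp
    then show ?thesis by (auto simp: sup2_def cor_def)
  next
    case False
    show ?thesis
    proof (cases "?y i = n")
      case True
      have "?y = P i j n" using yf(1) True by (simp only:)
      then have "?y = g (cor i)" using g_cor ij P_n[of i j] by simp
      then have "x = cor i" using aut_inj[OF g_aut x cor_V[OF ij(1)]] by simp
      then show ?thesis by (auto simp: sup2_def cor_def)
    next
      case False
      let ?h = "restrict (inv_into V g) V"
      have h: "?h \<in> SR_Aut m n" by (rule inv_aut[OF g_aut])
      have yi: "0 < ?y i" "?y i < n" using False \<open>?y i \<noteq> 0\<close> yf(2) by auto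
      obtain v where v: "0 < v" "v < n" "?h (P i j (?y i)) = P i j v"
        using P_img[OF h inv_aut_cor[OF g_aut g_cor] ij yi] by blast
      have inj: "inj_on g V" using aut_bij[OF g_aut] by (simp add: bij_betw_def)
      have "?h ?y = x" using yV inv_into_f_f[OF inj x] by simp
      then have "x = ?h (P i j (?y i))" using yf(1) by (simp only:)
      then have "x = P i j v" using v(3) by (simp only:)
      then show ?thesis by (auto simp: sup2_def P_def)
    qed
  qed
qed

end

context SR begin

lemma coord_le:
  assumes w: "w \<in> V" shows "w i \<le> n"
proof (cases "i < m")
  case True
  have "w i \<le> (\<Sum>t<m. w t)" using True by (intro member_le_sum) auto
  then show ?thesis using w by (simp add: SR_verts_iff)
next
  case False then show ?thesis using w by (simp add: SR_verts_iff)
qed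

lemma two_out:
  assumes x: "x \<in> V" and ns: "\<forall>j<m. j \<noteq> 0 \<longrightarrow> \<not> sup2 x 0 j"
  shows "\<exists>j k. j < m \<and> k < m \<and> j \<noteq> 0 \<and> k \<noteq> 0 \<and> j \<noteq> k \<and> x j \<noteq> 0 \<and> x k \<noteq> 0"
proof -
  have "\<not> sup2 x 0 1" using ns m3 by auto
  then obtain j where j: "j < m" "j \<noteq> 0" "j \<noteq> 1" "x j \<noteq> 0" by (auto simp: sup2_def)
  have "\<not> sup2 x 0 j" using ns j by auto
  then obtain k where k: "k < m" "k \<noteq> 0" "k \<noteq> j" "x k \<noteq> 0" by (auto simp: sup2_def)
  show ?thesis using j k by blast
qed

lemma fix_all:
  assumes g: "g \<in> SR_Aut m n" and gc: "\<forall>i<m. g (cor i) = cor i"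
    and gp: "\<And>i j u. i < m \<Longrightarrow> j < m \<Longrightarrow> i \<noteq> j \<Longrightarrow> 0 < u \<Longrightarrow> u < n \<Longrightarrow> g (P i j u) = P i j u"
    and x: "x \<in> V"
  shows "g x = x"
proof -
  have m0: "0 < m" using m3 by simp
  have "\<forall>x\<in>V. n - x 0 = d \<longrightarrow> g x = x" for d
  proof (induct d rule: less_induct)
    case (less d)
    show ?case
    proof (intro ballI impI)
      fix x assume x: "x \<in> V" and d: "n - x 0 = d"
      have IH: "\<And>w. w \<in> V \<Longrightarrow> n - w 0 < d \<Longrightarrow> g w = w" using less by blast
      show "g x = x"
      proof (cases "\<exists>j<m. j \<noteq> 0 \<and> sup2 x 0 j")
        case True
        then obtain j where j: "j < m" "j \<noteq> 0" "sup2 x 0 j" by blast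
        have xf: "x = P 0 j (x 0)" "x 0 \<le> n" using sup2_form[OF x j(3) m0 j(1) j(2)[symmetric]] by auto
        show ?thesis
        proof (cases "x 0 = 0")
          case True
          have "x = P 0 j 0" using xf(1) True by (simp only:)
          then have "x = cor j" using P_0 j by simp
          then show ?thesis using gc j by simp
        next
          case False
          show ?thesis
          proof (cases "x 0 = n")
            case True
            have "x = P 0 j n" using xf(1) True by (simp only:)
            then have "x = cor 0" using P_n by simp
            then show ?thesis using gc m0 by simp
          next
            case False
            have "g (P 0 j (x 0)) = P 0 j (x 0)" using gp[OF m0 j(1)] j(2) False \<open>x 0 \<noteq> 0\<close> xf(2) by simp
            then show ?thesis using xf(1) by simp
          qed
        qed
      next
        case False
        then obtain j k where jk: "j < m" "k < m" "j \<noteq> 0" "k \<noteq> 0" "j \<noteq> k" "x j \<noteq> 0" "x k \<noteq> 0"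
          using two_out[OF x] by blast
        define zj where "zj = x(0 := x 0 + 1, j := x j - 1)"
        define zk where "zk = x(0 := x 0 + 1, k := x k - 1)"
        have zjV: "zj \<in> V" unfolding zj_def using jk m0 by (auto intro!: vert_upd2[OF x])
        have zkV: "zk \<in> V" unfolding zk_def using jk m0 by (auto intro!: vert_upd2[OF x])
        have s: "x 0 + x j \<le> n"
        proof -
          have "(\<Sum>i<m. x i) = x 0 + x j + (\<Sum>i\<in>{..<m} - {0,j}. x i)" using sum_split2[OF m0 jk(1)] jk(3) by simp
          then show ?thesis using x by (simp add: SR_verts_iff)
        qed
        have gzj: "g zj = zj" using IH[OF zjV] d s jk by (simp add: zj_def)
        have s2: "x 0 + x k \<le> n"
        proof -
          have "(\<Sum>i<m. x i) = x 0 + x k + (\<Sum>i\<in>{..<m} - {0,k}. x i)" using sum_split2[OF m0 jk(2)] jk(4) by simp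
          then show ?thesis using x by (simp add: SR_verts_iff)
        qed
        have gzk: "g zk = zk" using IH[OF zkV] d s2 jk by (simp add: zk_def)
        let ?y = "g x"
        have yV: "?y \<in> V" using aut_V[OF g x] .
        have axj: "adj x zj" unfolding zj_def by (rule adjI[where a=0 and b=j]) (use jk m0 in auto)
        have axk: "adj x zk" unfolding zk_def by (rule adjI[where a=0 and b=k]) (use jk m0 in auto)
        have ayj: "adj ?y zj" using aut_adj[OF g x zjV] axj gzj by simp
        have ayk: "adj ?y zk" using aut_adj[OF g x zkV] axk gzk by simp
        have y0: "?y 0 \<le> x 0"
        proof (rule ccontr)
          assume "\<not> ?y 0 \<le> x 0"
          then have "n - ?y 0 < d" using d coord_le[OF yV, of 0] by linarith
          then have "g ?y = ?y" using IH[OF yV] by blast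
          then have "?y = x" using aut_inj[OF g yV x] by simp
          then show False using \<open>\<not> ?y 0 \<le> x 0\<close> by simp
        qed
        have d0j: "?y 0 \<noteq> zj 0" using y0 jk by (simp add: zj_def)
        have d0k: "?y 0 \<noteq> zk 0" using y0 jk by (simp add: zk_def)
        obtain bj where bj: "bj < m" "bj \<noteq> 0" "?y bj \<noteq> zj bj" "\<forall>t<m. t \<noteq> 0 \<longrightarrow> t \<noteq> bj \<longrightarrow> ?y t = zj t"
          using adj_other[OF ayj m0 d0j] by blast
        obtain bk where bk: "bk < m" "bk \<noteq> 0" "?y bk \<noteq> zk bk" "\<forall>t<m. t \<noteq> 0 \<longrightarrow> t \<noteq> bk \<longrightarrow> ?y t = zk t"
          using adj_other[OF ayk m0 d0k] by blast
        have bjj: "bj = j"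
        proof (rule ccontr)
          assume "bj \<noteq> j"
          then have yj: "?y j = x j - 1" using bj(4) jk by (simp add: zj_def)
          then have "?y j \<noteq> zk j" using jk by (simp add: zk_def)
          then have "bk = j" using bk(4) jk by blast
          then have yk: "?y k = x k - 1" using bk(4) jk by (simp add: zk_def)
          then have "?y k \<noteq> zj k" using jk by (simp add: zj_def)
          then have "bj = k" using bj(4) jk by blast
          have "?y 0 + ?y k = zj 0 + zj k"
            by (rule vert_sum2[OF yV zjV m0 jk(2) jk(4)[symmetric]]) (use bj(4) \<open>bj = k\<close> in auto)
          then show False using yk y0 jk by (simp add: zj_def)
        qed
        have bkk: "bk = k"
        proof (rule ccontr)
          assume "bk \<noteq> k"
          then have yk: "?y k = x k - 1" using bk(4) jk by (simp add: zk_def)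
          then have "?y k \<noteq> zj k" using jk by (simp add: zj_def)
          then have "bj = k" using bj(4) jk by blast
          then show False using bjj jk by simp
        qed
        have yt: "\<And>t. t < m \<Longrightarrow> t \<noteq> 0 \<Longrightarrow> ?y t = x t"
        proof -
          fix t assume t: "t < m" "t \<noteq> 0"
          show "?y t = x t"
          proof (cases "t = j")
            case True then show ?thesis using bk(4) bkk jk t by (simp add: zk_def)
          next
            case False then show ?thesis using bj(4) bjj jk t by (simp add: zj_def)
          qed
        qed
        have "?y 0 + ?y j = x 0 + x j"
          by (rule vert_sum2[OF yV x m0 jk(1) jk(3)[symmetric]]) (use yt in auto)
        then have "?y 0 = x 0" using yt[OF jk(1,3)] by simp
        then show ?thesis using yt by (intro vert_eqI[OF yV x]) (metis)
      qed
    qed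
  qed
  then show ?thesis using x by blast
qed

end

lemma incr_id:
  fixes f :: "nat \<Rightarrow> nat"
  assumes st: "\<And>k. 1 \<le> k \<Longrightarrow> k < N \<Longrightarrow> f k + 1 \<le> f (Suc k)"
    and f1: "1 \<le> f 1" and fN: "f N \<le> N" and k: "1 \<le> k" "k \<le> N"
  shows "f k = k"
proof -
  have lo: "\<And>k. 1 \<le> k \<Longrightarrow> k \<le> N \<Longrightarrow> k \<le> f k"
  proof -
    fix k :: nat assume "1 \<le> k" "k \<le> N"
    then show "k \<le> f k"
    proof (induct k)
      case 0 then show ?case by simp
    next
      case (Suc k)
      show ?case
      proof (cases "k = 0")
        case True then show ?thesis using f1 by simp
      next
        case False
        then have "k \<le> f k" using Suc by simp
        moreover have "f k + 1 \<le> f (Suc k)" using st[of k] Suc False by simp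
        ultimately show ?thesis by simp
      qed
    qed
  qed
  have up: "\<And>j. k + j \<le> N \<Longrightarrow> f k + j \<le> f (k + j)"
  proof -
    fix j show "k + j \<le> N \<Longrightarrow> f k + j \<le> f (k + j)"
    proof (induct j)
      case 0 then show ?case by simp
    next
      case (Suc j)
      then have "f k + j \<le> f (k + j)" by simp
      moreover have "f (k + j) + 1 \<le> f (Suc (k + j))" using st[of "k + j"] Suc k by simp
      ultimately show ?case by simp
    qed
  qed
  have "f k + (N - k) \<le> f N" using up[of "N - k"] k by simp
  then show ?thesis using lo[OF k] fN k by simp
qed

context SR begin

lemma sum3_le:
  assumes y: "y \<in> V" shows "y 0 + y 1 + y 2 \<le> n"
proof -
  have "(\<Sum>i\<in>{0,1,2::nat}. y i) \<le> (\<Sum>i<m. y i)" using m3 by (intro sum_mono2) auto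
  then show ?thesis using y by (simp add: SR_verts_iff)
qed

lemma adj_P_cond:
  assumes "adj y (P i j \<beta>)" "i < m" "j < m" "r < m" "i \<noteq> j" "r \<noteq> i" "r \<noteq> j" "y r \<noteq> 0"
  shows "y i = \<beta> \<or> y j = n - \<beta>"
proof (rule ccontr)
  assume "\<not> ?thesis"
  then show False using not_adj3[OF assms(1), of i j r] assms by (auto simp: P_def)
qed

end

context SRg begin

lemma phi_ne: "0 < u \<Longrightarrow> u < n \<Longrightarrow> 0 < v \<Longrightarrow> v < n \<Longrightarrow> u \<noteq> v \<Longrightarrow> phi u \<noteq> phi v"
  using phi_inj by blast

lemma phi_add:
  assumes a: "1 \<le> a" and b: "1 \<le> b" and ab: "a + b < n" and bc: "b \<noteq> n - a - b"
  shows "phi a + phi b \<le> phi (a + b)"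
proof -
  define c where "c = n - a - b"
  have c: "1 \<le> c" "a + b + c = n" using ab by (auto simp: c_def)
  have m2: "0 < m" "1 < m" "2 < m" using m3 by auto
  define x where "x = (P 0 1 a)(1 := b, 2 := c)"
  have xV: "x \<in> V" unfolding x_def using P_V[of 0 1 a] m2 c ab by (intro vert_upd2) (auto simp: P_def)
  have x0: "x 0 = a" "x 1 = b" "x 2 = c" by (auto simp: x_def P_def)
  have x3: "\<And>t. t \<noteq> 0 \<Longrightarrow> t \<noteq> 1 \<Longrightarrow> t \<noteq> 2 \<Longrightarrow> x t = 0" by (auto simp: x_def P_def)
  let ?y = "g x"
  have yV: "?y \<in> V" using aut_V[OF g_aut xV] .
  have ns: "\<And>i j. i < m \<Longrightarrow> j < m \<Longrightarrow> i \<noteq> j \<Longrightarrow> \<not> sup2 x i j \<Longrightarrow> \<exists>r<m. r \<noteq> i \<and> r \<noteq> j \<and> ?y r \<noteq> 0"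
    using sup2_back[OF xV] unfolding sup2_def by blast
  have n01: "\<not> sup2 x 0 1" using x0 c m2 by (auto simp: sup2_def intro!: exI[of _ 2])
  have n02: "\<not> sup2 x 0 2" using x0 b m2 by (auto simp: sup2_def intro!: exI[of _ 1])
  have n12: "\<not> sup2 x 1 2" using x0 a m2 by (auto simp: sup2_def intro!: exI[of _ 0])
  obtain r1 where r1: "r1 < m" "r1 \<noteq> 0" "r1 \<noteq> 1" "?y r1 \<noteq> 0" using ns[OF m2(1,2) _ n01] by auto
  obtain r2 where r2: "r2 < m" "r2 \<noteq> 0" "r2 \<noteq> 2" "?y r2 \<noteq> 0" using ns[OF m2(1,3) _ n02] by auto
  obtain r3 where r3: "r3 < m" "r3 \<noteq> 1" "r3 \<noteq> 2" "?y r3 \<noteq> 0" using ns[OF m2(2,3) _ n12] by auto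
  have key: "\<And>i j \<beta>. i < m \<Longrightarrow> j < m \<Longrightarrow> i \<noteq> j \<Longrightarrow> 0 < \<beta> \<Longrightarrow> \<beta> < n \<Longrightarrow> adj x (P i j \<beta>)
       \<Longrightarrow> adj ?y (P i j (phi \<beta>))"
  proof -
    fix i j \<beta> assume h: "i < m" "j < m" "i \<noteq> j" "0 < \<beta>" "\<beta> < n" "adj x (P i j \<beta>)"
    have PV: "P i j \<beta> \<in> V" using P_V h by simp
    show "adj ?y (P i j (phi \<beta>))" using aut_adj[OF g_aut xV PV] h gP[OF h(1-5)] by simp
  qed
  have A1: "adj x (P 0 1 (a + c))" by (rule adjI[where a=0 and b=2]) (use x0 x3 c m2 in \<open>auto simp: P_def\<close>)
  have A2: "adj x (P 0 1 a)" by (rule adjI[where a=1 and b=2]) (use x0 x3 c m2 in \<open>auto simp: P_def\<close>)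
  have A3: "adj x (P 0 2 (a + b))" by (rule adjI[where a=0 and b=1]) (use x0 x3 c b m2 in \<open>auto simp: P_def\<close>)
  have A4: "adj x (P 0 2 a)" by (rule adjI[where a=1 and b=2]) (use x0 x3 c b m2 in \<open>auto simp: P_def\<close>)
  have A5: "adj x (P 1 2 (a + b))" by (rule adjI[where a=0 and b=1]) (use x0 x3 c a m2 in \<open>auto simp: P_def\<close>)
  have A6: "adj x (P 1 2 b)" by (rule adjI[where a=0 and b=2]) (use x0 x3 c a m2 in \<open>auto simp: P_def\<close>)
  have C1: "?y 0 = phi (a + c) \<or> ?y 1 = n - phi (a + c)"
    by (rule adj_P_cond[OF key[OF m2(1,2) _ _ _ A1] m2(1,2) r1(1) _ r1(2,3,4)]) (use a b c in auto)
  have C2: "?y 0 = phi a \<or> ?y 1 = n - phi a"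
    by (rule adj_P_cond[OF key[OF m2(1,2) _ _ _ A2] m2(1,2) r1(1) _ r1(2,3,4)]) (use a b c in auto)
  have C3: "?y 0 = phi (a + b) \<or> ?y 2 = n - phi (a + b)"
    by (rule adj_P_cond[OF key[OF m2(1,3) _ _ _ A3] m2(1,3) r2(1) _ r2(2,3,4)]) (use a b c in auto)
  have C4: "?y 0 = phi a \<or> ?y 2 = n - phi a"
    by (rule adj_P_cond[OF key[OF m2(1,3) _ _ _ A4] m2(1,3) r2(1) _ r2(2,3,4)]) (use a b c in auto)
  have C6: "?y 1 = phi b \<or> ?y 2 = n - phi b"
    by (rule adj_P_cond[OF key[OF m2(2,3) _ _ _ A6] m2(2,3) r3(1) _ r3(2,3,4)]) (use a b c in auto)
  have S: "?y 0 + ?y 1 + ?y 2 \<le> n" using sum3_le[OF yV] .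
  have bc': "b \<noteq> c" using bc c_def by simp
  have inj1: "phi a \<noteq> phi (a + c)" by (rule phi_ne) (use a b c in linarith)+
  have inj2: "phi a \<noteq> phi (a + b)" by (rule phi_ne) (use a b c in linarith)+
  have inj3: "phi b \<noteq> phi (a + b)" by (rule phi_ne) (use a b c in linarith)+
  have inj4: "phi (a + b) \<noteq> phi (a + c)" by (rule phi_ne) (use a b c bc' in linarith)+
  have lt: "phi (a + c) < n" "phi a < n" "phi (a + b) < n" "phi b < n"
    using gP(3)[OF m2(1,2)] a b c by auto
  show ?thesis using C1 C2 C3 C4 C6 S inj1 inj2 inj3 inj4 lt by auto
qed

lemma phi_id:
  assumes n4: "3 < n" and u: "0 < u" "u < n"
  shows "phi u = u"
proof (rule incr_id[where N = "n - 1"])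
  fix k assume k: "1 \<le> k" "k < n - 1"
  have p1: "1 \<le> phi 1" using gP(2)[of 0 1 1] m3 n3 by auto
  have "phi k + phi 1 \<le> phi (Suc k)"
  proof (cases "1 = n - k - 1")
    case False
    then show ?thesis using phi_add[of k 1] k by auto
  next
    case True
    then have "k \<noteq> n - 1 - k" using n4 by auto
    then show ?thesis using phi_add[of 1 k] k by (auto simp: add.commute)
  qed
  then show "phi k + 1 \<le> phi (Suc k)" using p1 by simp
next
  show "1 \<le> phi 1" using gP(2)[of 0 1 1] m3 n3 by auto
  show "phi (n - 1) \<le> n - 1" using gP(3)[of 0 1 "n - 1"] m3 n3 by auto
  show "1 \<le> u" "u \<le> n - 1" using u by auto
qed

end

context SR begin

lemma aut_compose:
  assumes f: "f \<in> SR_Aut m n" and h: "h \<in> SR_Aut m n"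
  shows "compose V f h \<in> SR_Aut m n"
proof -
  have B: "compose V f h \<in> Bij V" using f h by (intro compose_Bij) (auto simp: SR_Aut_def)
  have "\<forall>x\<in>V. \<forall>y\<in>V. adj (compose V f h x) (compose V f h y) \<longleftrightarrow> adj x y"
    using aut_adj[OF f] aut_adj[OF h] aut_V[OF h] by (simp add: compose_def)
  then show ?thesis using B by (simp add: SR_Aut_def)
qed

definition sw :: "nat \<Rightarrow> nat" where "sw v = (if v = 1 then 2 else if v = 2 then 1 else v)"

lemma sw_sw: "sw (sw v) = v" by (simp add: sw_def)
lemma sw_inj: "sw u = sw v \<longleftrightarrow> u = v" by (metis sw_sw)

lemma swap12_alt: "x \<in> V \<Longrightarrow> swap12 m n x = (if \<exists>i. x i = 2 then (\<lambda>k. sw (x k)) else x)"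
  by (simp add: swap12_def sw_def)

lemma has2_form:
  assumes n: "n = 3" and x: "x \<in> V" and xi: "x i = 2"
  shows "i < m \<and> (\<exists>j<m. j \<noteq> i \<and> x j = 1 \<and> (\<forall>t<m. t \<noteq> i \<longrightarrow> t \<noteq> j \<longrightarrow> x t = 0))"
proof -
  have im: "i < m" using x xi by (metis SR_verts_iff not_le zero_neq_numeral)
  have "(\<Sum>t<m. x t) = x i + (\<Sum>t\<in>{..<m} - {i}. x t)" using im by (simp add: sum.remove)
  then have s1: "(\<Sum>t\<in>{..<m} - {i}. x t) = 1" using x xi n by (simp add: SR_verts_iff)
  then obtain j where j: "j \<in> {..<m} - {i}" "x j \<noteq> 0" by (metis sum.neutral zero_neq_one)
  have "x j \<le> (\<Sum>t\<in>{..<m} - {i}. x t)" using j by (intro member_le_sum) auto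
  then have xj: "x j = 1" using s1 j by simp
  have jm: "j < m" "j \<noteq> i" using j by auto
  have "(\<Sum>t<m. x t) = x i + x j + (\<Sum>t\<in>{..<m} - {i,j}. x t)" using sum_split2[OF im jm(1)] jm by simp
  then have "(\<Sum>t\<in>{..<m} - {i,j}. x t) = 0" using x xi xj n by (simp add: SR_verts_iff)
  then have "\<forall>t\<in>{..<m} - {i,j}. x t = 0" by simp
  then show ?thesis using im jm xj by blast
qed

lemma swap12_form:
  assumes n: "n = 3" and x: "x \<in> V" and xi: "x i = 2" and j: "j \<noteq> i" "x j = 1"
    and z: "\<And>t. t < m \<Longrightarrow> t \<noteq> i \<Longrightarrow> t \<noteq> j \<Longrightarrow> x t = 0"
  shows "swap12 m n x = x(i := 1, j := 2)"
proof
  fix k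
  have "x k = 0" if "k \<noteq> i" "k \<noteq> j" using z that x by (cases "k < m") (auto simp: SR_verts_iff)
  then show "swap12 m n x k = (x(i := 1, j := 2)) k" using swap12_alt[OF x] xi j by (auto simp: sw_def)
qed

end

context SR begin

lemma swap12_V:
  assumes n: "n = 3" and x: "x \<in> V" shows "swap12 m n x \<in> V"
proof (cases "\<exists>i. x i = 2")
  case True
  then obtain i where xi: "x i = 2" by blast
  obtain j where j: "i < m" "j < m" "j \<noteq> i" "x j = 1" "\<forall>t<m. t \<noteq> i \<longrightarrow> t \<noteq> j \<longrightarrow> x t = 0"
    using has2_form[OF n x xi] by blast
  have "swap12 m n x = x(i := 1, j := 2)" using swap12_form[OF n x xi j(3,4)] j(5) by blast
  moreover have "x(i := 1, j := 2) \<in> V" using j xi by (intro vert_upd2[OF x]) auto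
  ultimately show ?thesis by simp
next
  case False then show ?thesis using swap12_alt[OF x] x by simp
qed

lemma swap12_has2:
  assumes n: "n = 3" and x: "x \<in> V" shows "(\<exists>i. swap12 m n x i = 2) \<longleftrightarrow> (\<exists>i. x i = 2)"
proof (cases "\<exists>i. x i = 2")
  case True
  then obtain i where xi: "x i = 2" by blast
  obtain j where j: "i < m" "j < m" "j \<noteq> i" "x j = 1" "\<forall>t<m. t \<noteq> i \<longrightarrow> t \<noteq> j \<longrightarrow> x t = 0"
    using has2_form[OF n x xi] by blast
  have "swap12 m n x j = 2" using swap12_alt[OF x] True j by (simp add: sw_def)
  then show ?thesis using True by blast
next
  case False then show ?thesis using swap12_alt[OF x] by simp
qed

lemma swap12_invol:
  assumes n: "n = 3" and x: "x \<in> V" shows "swap12 m n (swap12 m n x) = x"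
proof (cases "\<exists>i. x i = 2")
  case True
  then have "swap12 m n x = (\<lambda>k. sw (x k))" using swap12_alt[OF x] by simp
  moreover have "\<exists>i. swap12 m n x i = 2" using swap12_has2[OF n x] True by simp
  ultimately show ?thesis using swap12_alt[OF swap12_V[OF n x]] by (simp add: sw_sw)
next
  case False then show ?thesis using swap12_alt[OF x] by simp
qed

lemma swap12_mixed:
  assumes n: "n = 3" and x: "x \<in> V" and y: "y \<in> V" and a: "adj x y"
    and xi: "x i = 2" and y2: "\<forall>t. y t \<noteq> 2"
  shows "adj (swap12 m n x) y"
proof -
  obtain j where j: "i < m" "j < m" "j \<noteq> i" "x j = 1" "\<forall>t<m. t \<noteq> i \<longrightarrow> t \<noteq> j \<longrightarrow> x t = 0"
    using has2_form[OF n x xi] by blast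
  have s: "swap12 m n x = x(i := 1, j := 2)" using swap12_form[OF n x xi j(3,4)] j(5) by blast
  have d: "x i \<noteq> y i" using xi y2 by metis
  obtain b where b: "b < m" "b \<noteq> i" "x b \<noteq> y b" "\<forall>t<m. t \<noteq> i \<longrightarrow> t \<noteq> b \<longrightarrow> x t = y t"
    using adj_other[OF a j(1) d] by blast
  have sm: "x i + x b = y i + y b" by (rule vert_sum2[OF x y j(1) b(1) b(2)[symmetric]]) (use b in auto)
  show ?thesis
  proof (cases "b = j")
    case True
    have "y i \<noteq> 1"
    proof
      assume "y i = 1" then have "y j = 2" using sm True xi j by simp
      then show False using y2 by blast
    qed
    moreover have "y j \<noteq> 2" using y2 by blast
    ultimately show ?thesis unfolding s
      by (intro adjI[where a=i and b=j]) (use j b True in auto)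
  next
    case False
    have xb: "x b = 0" using j b False by auto
    have yj: "y j = 1" using b(4) j False by auto
    have "y b \<noteq> 0" using b(3) xb by simp
    moreover have "y i \<noteq> 2" "y b \<noteq> 2" using y2 by auto
    ultimately have yi: "y i = 1" "y b = 1" using sm xi xb by auto
    show ?thesis unfolding s
    proof (rule adjI[where a=j and b=b])
      fix t assume "t < m" "t \<noteq> j" "t \<noteq> b"
      then show "(x(i := 1, j := 2)) t = y t" using b(4) yi by (cases "t = i") auto
    qed (use j b False yj xb yi in auto)
  qed
qed

lemma swap12_adj1:
  assumes n: "n = 3" and x: "x \<in> V" and y: "y \<in> V" and a: "adj x y"
  shows "adj (swap12 m n x) (swap12 m n y)"
proof (cases "\<exists>i. x i = 2")
  case True
  note tx = True
  show ?thesis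
  proof (cases "\<exists>i. y i = 2")
    case True
    have sx: "swap12 m n x = (\<lambda>k. sw (x k))" using swap12_alt[OF x] tx by simp
    have sy: "swap12 m n y = (\<lambda>k. sw (y k))" using swap12_alt[OF y] True by simp
    show ?thesis using a unfolding sx sy adj_iff by (simp add: sw_inj)
  next
    case False
    then have "swap12 m n y = y" using swap12_alt[OF y] by simp
    then show ?thesis using swap12_mixed[OF n x y a] tx False by auto
  qed
next
  case False
  note fx = False
  then have sx: "swap12 m n x = x" using swap12_alt[OF x] by simp
  show ?thesis
  proof (cases "\<exists>i. y i = 2")
    case True
    then obtain i where "y i = 2" by blast
    then have "adj (swap12 m n y) x" using swap12_mixed[OF n y x adj_sym[OF a]] fx by auto
    then show ?thesis using sx adj_sym by simp
  next
    case False
    then show ?thesis using swap12_alt[OF y] sx a by simp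
  qed
qed

lemma swap12_aut:
  assumes n: "n = 3" shows "swap12 m n \<in> SR_Aut m n"
proof -
  have bij: "bij_betw (swap12 m n) V V"
    by (rule bij_betw_byWitness[where f'="swap12 m n"]) (use swap12_invol[OF n] swap12_V[OF n] in auto)
  have ext: "swap12 m n \<in> extensional V" by (simp add: swap12_def)
  have "\<forall>x\<in>V. \<forall>y\<in>V. adj (swap12 m n x) (swap12 m n y) \<longleftrightarrow> adj x y"
  proof (intro ballI iffI)
    fix x y assume x: "x \<in> V" and y: "y \<in> V"
    show "adj x y \<Longrightarrow> adj (swap12 m n x) (swap12 m n y)" using swap12_adj1[OF n x y] .
    assume "adj (swap12 m n x) (swap12 m n y)"
    then have "adj (swap12 m n (swap12 m n x)) (swap12 m n (swap12 m n y))"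
      using swap12_adj1[OF n swap12_V[OF n x] swap12_V[OF n y]] by simp
    then show "adj x y" using swap12_invol[OF n] x y by simp
  qed
  then show ?thesis using bij ext by (simp add: SR_Aut_def Bij_def)
qed

lemma swap12_cor:
  assumes n: "n = 3" and i: "i < m" shows "swap12 m n (cor i) = cor i"
proof -
  have "n \<noteq> 2" using n by simp
  then have "\<forall>k. cor i k \<noteq> 2" by (simp add: cor_def)
  then show ?thesis using swap12_alt[OF cor_V[OF i]] by simp
qed

lemma swap12_P:
  assumes n: "n = 3" and ij: "i < m" "j < m" "i \<noteq> j" and u: "0 < u" "u < n"
  shows "swap12 m n (P i j u) = P i j (3 - u)"
proof -
  have PV: "P i j u \<in> V" using P_V ij u by simp
  have "\<exists>k. P i j u k = 2"
  proof (cases "u = 2")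
    case True then show ?thesis using P_app(1)[of i j u] by blast
  next
    case False then have "u = 1" using u n by simp
    then show ?thesis using P_app(2)[of i j u] ij n by auto
  qed
  then have "swap12 m n (P i j u) = (\<lambda>k. sw (P i j u k))" using swap12_alt[OF PV] by simp
  also have "\<dots> = P i j (3 - u)" unfolding P_def sw_def proof (rule ext)
    fix k
    have "u = 1 \<or> u = 2" using u n by auto
    then show "(if (if k = i then u else if k = j then n - u else 0) = 1 then 2
             else if (if k = i then u else if k = j then n - u else 0) = 2 then 1
                  else if k = i then u else if k = j then n - u else 0) =
        (if k = i then 3 - u else if k = j then n - (3 - u) else 0)" using n ij by auto
  qed
  finally show ?thesis .
qed

end

context SRg begin

lemma g_id:
  assumes n4: "3 < n" and x: "x \<in> V" shows "g x = x"
  by (rule fix_all[OF g_aut g_cor _ x]) (use gP phi_id[OF n4] in simp)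

lemma g_n3:
  assumes n: "n = 3"
  shows "(\<forall>x\<in>V. g x = x) \<or> (\<forall>x\<in>V. g x = swap12 m n x)"
proof -
  have m1: "0 < m" "1 < m" "(0::nat) \<noteq> 1" using m3 by auto
  have r1: "0 < phi 1" "phi 1 < n" using gP(2,3)[OF m1, of 1] n by auto
  have r2: "0 < phi 2" "phi 2 < n" using gP(2,3)[OF m1, of 2] n by auto
  have ne: "phi 1 \<noteq> phi 2" by (rule phi_ne) (use n in auto)
  show ?thesis
  proof (cases "phi 1 = 1")
    case True
    then have "phi 2 = 2" using r2 ne n by auto
    note p2 = this
    have fx: "g (P i j u) = P i j u" if ij: "i < m" "j < m" "i \<noteq> j" "0 < u" "u < n" for i j u
    proof -
      have "u = 1 \<or> u = 2" using ij n by auto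
      then have "phi u = u" using True p2 by auto
      then show ?thesis using gP(1)[OF ij] by simp
    qed
    have "\<forall>x\<in>V. g x = x" using fix_all[OF g_aut g_cor fx] by blast
    then show ?thesis by simp
  next
    case False
    then have p1: "phi 1 = 2" and p2: "phi 2 = 1" using r1 r2 ne n by auto
    let ?s = "swap12 m n"
    let ?h = "compose V g ?s"
    have s: "?s \<in> SR_Aut m n" using swap12_aut[OF n] .
    have h: "?h \<in> SR_Aut m n" using aut_compose[OF g_aut s] .
    have hc: "\<forall>i<m. ?h (cor i) = cor i"
      using swap12_cor[OF n] g_cor cor_V by (simp add: compose_def)
    have hp: "?h (P i j u) = P i j u" if ij: "i < m" "j < m" "i \<noteq> j" "0 < u" "u < n" for i j u
    proof -
      have "?h (P i j u) = g (P i j (3 - u))" using swap12_P[OF n ij] P_V ij by (simp add: compose_def)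
      also have "\<dots> = P i j (phi (3 - u))" using gP(1)[of i j "3 - u"] ij n by simp
      also have "phi (3 - u) = u"
      proof -
        have "u = 1 \<or> u = 2" using ij n by auto
        then show ?thesis using p1 p2 by auto
      qed
      finally show ?thesis .
    qed
    have "\<forall>x\<in>V. g x = ?s x"
    proof
      fix x assume x: "x \<in> V"
      have sx: "?s x \<in> V" using swap12_V[OF n x] .
      have "?h (?s x) = ?s x" using fix_all[OF h hc hp sx] by blast
      then show "g x = ?s x" using swap12_invol[OF n x] sx by (simp add: compose_def)
    qed
    then show ?thesis by simp
  qed
qed

end

context SR begin

lemma cp_apply: "x \<in> V \<Longrightarrow> coord_perm m n \<sigma> x = (\<lambda>i. x (inv_into UNIV \<sigma> i))"
  by (simp add: coord_perm_def)

lemma cp_V: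
  assumes s: "\<sigma> permutes {..<m}" and x: "x \<in> V"
  shows "coord_perm m n \<sigma> x \<in> V"
proof -
  have si: "inv_into UNIV \<sigma> permutes {..<m}" using permutes_inv[OF s] .
  have 1: "\<forall>i\<ge>m. x (inv_into UNIV \<sigma> i) = 0" using permutes_not_in[OF si] x by (simp add: SR_verts_iff)
  have "(\<Sum>i<m. x i) = (\<Sum>i<m. (x \<circ> inv_into UNIV \<sigma>) i)" using sum.permute[OF si, of x] by simp
  then have 2: "(\<Sum>i<m. x (inv_into UNIV \<sigma> i)) = n" using x by (simp add: SR_verts_iff)
  show ?thesis unfolding cp_apply[OF x] SR_verts_iff using 1 2 by simp
qed

lemma adj_perm:
  assumes t: "\<tau> permutes {..<m}"
  shows "adj (\<lambda>i. x (\<tau> i)) (\<lambda>i. y (\<tau> i)) \<longleftrightarrow> adj x y"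
proof -
  let ?A = "{i. i < m \<and> x (\<tau> i) \<noteq> y (\<tau> i)}"
  let ?B = "{i. i < m \<and> x i \<noteq> y i}"
  have im: "\<tau> ` ?A = ?B"
  proof (intro equalityI subsetI)
    fix j assume "j \<in> \<tau> ` ?A"
    then obtain i where "i \<in> ?A" "j = \<tau> i" by blast
    then show "j \<in> ?B" using permutes_in_image[OF t] by auto
  next
    fix j assume j: "j \<in> ?B"
    have "inv_into UNIV \<tau> j \<in> ?A" using j permutes_in_image[OF permutes_inv[OF t]] permutes_inverses(1)[OF t] by auto
    moreover have "j = \<tau> (inv_into UNIV \<tau> j)" using permutes_inverses(1)[OF t] by simp
    ultimately show "j \<in> \<tau> ` ?A" by blast
  qed
  have "inj_on \<tau> ?A" using permutes_inj[OF t] by (simp add: inj_on_def inj_def)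
  then have "card ?A = card ?B" using im card_image by fastforce
  then show ?thesis unfolding SR_adj_def by simp
qed

lemma cp_cp:
  assumes s: "\<sigma> permutes {..<m}" and t: "\<tau> permutes {..<m}" and x: "x \<in> V"
  shows "coord_perm m n \<sigma> (coord_perm m n \<tau> x) = coord_perm m n (\<sigma> \<circ> \<tau>) x"
proof -
  have "inv_into UNIV (\<sigma> \<circ> \<tau>) = inv_into UNIV \<tau> \<circ> inv_into UNIV \<sigma>" using permutes_bij[OF s] permutes_bij[OF t] by (simp add: o_inv_distrib)
  note eq = this
  have "coord_perm m n \<sigma> (coord_perm m n \<tau> x) = (\<lambda>i. coord_perm m n \<tau> x (inv_into UNIV \<sigma> i))"
    by (rule cp_apply[OF cp_V[OF t x]])
  also have "\<dots> = (\<lambda>i. x (inv_into UNIV \<tau> (inv_into UNIV \<sigma> i)))" by (simp add: cp_apply[OF x])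
  also have "\<dots> = coord_perm m n (\<sigma> \<circ> \<tau>) x" using eq by (simp add: cp_apply[OF x])
  finally show ?thesis .
qed

lemma cp_id: "x \<in> V \<Longrightarrow> coord_perm m n id x = x"
  by (simp add: cp_apply)

lemma cp_inv:
  assumes s: "\<sigma> permutes {..<m}" and x: "x \<in> V"
  shows "coord_perm m n (inv_into UNIV \<sigma>) (coord_perm m n \<sigma> x) = x" "coord_perm m n \<sigma> (coord_perm m n (inv_into UNIV \<sigma>) x) = x"
proof -
  have si: "inv_into UNIV \<sigma> permutes {..<m}" using permutes_inv[OF s] .
  show "coord_perm m n (inv_into UNIV \<sigma>) (coord_perm m n \<sigma> x) = x"
    using cp_cp[OF si s x] permutes_inv_o(2)[OF s] cp_id[OF x] by simp
  show "coord_perm m n \<sigma> (coord_perm m n (inv_into UNIV \<sigma>) x) = x"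
    using cp_cp[OF s si x] permutes_inv_o(1)[OF s] cp_id[OF x] by simp
qed

lemma cp_aut:
  assumes s: "\<sigma> permutes {..<m}"
  shows "coord_perm m n \<sigma> \<in> SR_Aut m n"
proof -
  have si: "inv_into UNIV \<sigma> permutes {..<m}" using permutes_inv[OF s] .
  have bij: "bij_betw (coord_perm m n \<sigma>) V V"
    by (rule bij_betw_byWitness[where f'="coord_perm m n (inv_into UNIV \<sigma>)"])
       (use cp_inv[OF s] cp_V[OF s] cp_V[OF si] in auto)
  have ext: "coord_perm m n \<sigma> \<in> extensional V" by (simp add: coord_perm_def)
  have "\<forall>x\<in>V. \<forall>y\<in>V. adj (coord_perm m n \<sigma> x) (coord_perm m n \<sigma> y) \<longleftrightarrow> adj x y"
    using adj_perm[OF si] by (simp add: cp_apply)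
  then show ?thesis using bij ext by (simp add: SR_Aut_def Bij_def)
qed

lemma cp_cor:
  assumes s: "\<sigma> permutes {..<m}" and i: "i < m"
  shows "coord_perm m n \<sigma> (cor i) = cor (\<sigma> i)"
proof -
  have "\<And>k. (inv_into UNIV \<sigma> k = i) \<longleftrightarrow> (k = \<sigma> i)" using permutes_inverses[OF s] by metis
  then show ?thesis unfolding cp_apply[OF cor_V[OF i]] by (auto simp: cor_def)
qed

end

context SR begin

lemma aut_ext: "f \<in> SR_Aut m n \<Longrightarrow> x \<notin> V \<Longrightarrow> f x = undefined"
  by (simp add: SR_Aut_def Bij_def extensional_def)

lemma aut_structure:
  assumes f: "f \<in> SR_Aut m n"
  shows "\<exists>\<sigma>. \<sigma> permutes {..<m} \<and> (3 < n \<longrightarrow> f = coord_perm m n \<sigma>) \<and>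
     (n = 3 \<longrightarrow> f = coord_perm m n \<sigma> \<or> f = compose V (coord_perm m n \<sigma>) (swap12 m n))"
proof -
  define \<sigma> where "\<sigma> i = (if i < m then (SOME j. j < m \<and> f (cor i) = cor j) else i)" for i
  have si: "\<sigma> i < m \<and> f (cor i) = cor (\<sigma> i)" if i: "i < m" for i
    unfolding \<sigma>_def using i someI_ex[OF cor_aut[OF f i]] by simp
  have inj: "inj_on \<sigma> {..<m}"
  proof (rule inj_onI)
    fix i j assume i: "i \<in> {..<m}" and j: "j \<in> {..<m}" and e: "\<sigma> i = \<sigma> j"
    then have "f (cor i) = f (cor j)" using si by auto
    then have "cor i = cor j" using aut_inj[OF f cor_V cor_V] i j by auto
    then show "i = j" by (rule cor_inj)
  qed
  have im: "\<sigma> ` {..<m} = {..<m}" using si inj by (intro endo_inj_surj) auto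
  have sp: "\<sigma> permutes {..<m}"
    by (rule bij_imp_permutes) (use inj im in \<open>auto simp: bij_betw_def \<sigma>_def\<close>)
  let ?t = "inv_into UNIV \<sigma>"
  have tp: "?t permutes {..<m}" using permutes_inv[OF sp] .
  let ?g = "compose V (coord_perm m n ?t) f"
  have g: "?g \<in> SR_Aut m n" using aut_compose[OF cp_aut[OF tp] f] .
  have gc: "\<forall>i<m. ?g (cor i) = cor i"
  proof (intro allI impI)
    fix i assume i: "i < m"
    have "?g (cor i) = coord_perm m n ?t (cor (\<sigma> i))" using si[OF i] cor_V[OF i] by (simp add: compose_def)
    also have "\<dots> = cor (?t (\<sigma> i))" using cp_cor[OF tp] si[OF i] by simp
    also have "?t (\<sigma> i) = i" using permutes_inverses(2)[OF sp] by simp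
    finally show "?g (cor i) = cor i" .
  qed
  interpret G: SRg m n ?g using g gc by unfold_locales auto
  have fg: "f x = coord_perm m n \<sigma> (?g x)" if x: "x \<in> V" for x
    using cp_inv(2)[OF sp aut_V[OF f x]] x by (simp add: compose_def)
  have c1: "3 < n \<longrightarrow> f = coord_perm m n \<sigma>"
  proof
    assume n4: "3 < n"
    show "f = coord_perm m n \<sigma>"
    proof
      fix x show "f x = coord_perm m n \<sigma> x"
      proof (cases "x \<in> V")
        case True then show ?thesis using fg G.g_id[OF n4 True] by simp
      next
        case False then show ?thesis using aut_ext[OF f] by (simp add: coord_perm_def)
      qed
    qed
  qed
  have c2: "n = 3 \<longrightarrow> f = coord_perm m n \<sigma> \<or> f = compose V (coord_perm m n \<sigma>) (swap12 m n)"
  proof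
    assume n: "n = 3"
    show "f = coord_perm m n \<sigma> \<or> f = compose V (coord_perm m n \<sigma>) (swap12 m n)"
      using G.g_n3[OF n]
    proof
      assume h: "\<forall>x\<in>V. ?g x = x"
      have "f = coord_perm m n \<sigma>"
      proof
        fix x show "f x = coord_perm m n \<sigma> x"
        proof (cases "x \<in> V")
          case True then show ?thesis using fg h by simp
        next
          case False then show ?thesis using aut_ext[OF f] by (simp add: coord_perm_def)
        qed
      qed
      then show ?thesis by simp
    next
      assume h: "\<forall>x\<in>V. ?g x = swap12 m n x"
      have "f = compose V (coord_perm m n \<sigma>) (swap12 m n)"
      proof
        fix x show "f x = compose V (coord_perm m n \<sigma>) (swap12 m n) x"
        proof (cases "x \<in> V")
          case True then show ?thesis using fg h by (simp add: compose_def)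
        next
          case False then show ?thesis using aut_ext[OF f] by (simp add: compose_def)
        qed
      qed
      then show ?thesis by simp
    qed
  qed
  show ?thesis using sp c1 c2 by blast
qed

lemma aut_subgroup: "subgroup (SR_Aut m n) (BijGroup V)"
proof (rule subgroup.intro)
  show "SR_Aut m n \<subseteq> carrier (BijGroup V)" by (auto simp: SR_Aut_def BijGroup_def)
next
  fix x y assume x: "x \<in> SR_Aut m n" and y: "y \<in> SR_Aut m n"
  then have "x \<in> Bij V" "y \<in> Bij V" by (auto simp: SR_Aut_def)
  then have "x \<otimes>\<^bsub>BijGroup V\<^esub> y = compose V x y" by (simp add: BijGroup_def)
  then show "x \<otimes>\<^bsub>BijGroup V\<^esub> y \<in> SR_Aut m n" using aut_compose[OF x y] by simp
next
  have "(\<lambda>x\<in>V. x) \<in> SR_Aut m n" by (simp add: SR_Aut_def id_Bij)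
  then show "\<one>\<^bsub>BijGroup V\<^esub> \<in> SR_Aut m n" by (simp add: BijGroup_def)
next
  fix x assume x: "x \<in> SR_Aut m n"
  then have "x \<in> Bij V" by (simp add: SR_Aut_def)
  then show "inv\<^bsub>BijGroup V\<^esub> x \<in> SR_Aut m n" using inv_aut[OF x] by (simp add: inv_BijGroup)
qed

lemma cps_image: "coord_perms m n = coord_perm m n ` {\<sigma>. \<sigma> permutes {..<m}}"
  by (auto simp: coord_perms_def)

lemma cp_inj:
  assumes s: "\<sigma> permutes {..<m}" and t: "\<tau> permutes {..<m}" and e: "coord_perm m n \<sigma> = coord_perm m n \<tau>"
  shows "\<sigma> = \<tau>"
proof
  fix i show "\<sigma> i = \<tau> i"
  proof (cases "i < m")
    case True
    have "cor (\<sigma> i) = cor (\<tau> i)" using cp_cor[OF s True] cp_cor[OF t True] e by simp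
    then show ?thesis by (rule cor_inj)
  next
    case False then show ?thesis using permutes_not_in[OF s] permutes_not_in[OF t] by simp
  qed
qed

lemma card_cps: "card (coord_perms m n) = fact m"
proof -
  have "inj_on (coord_perm m n) {\<sigma>. \<sigma> permutes {..<m}}" using cp_inj by (auto simp: inj_on_def)
  then have "card (coord_perms m n) = card {\<sigma>. \<sigma> permutes {..<m}}" unfolding cps_image by (rule card_image)
  also have "\<dots> = fact m" by (rule card_permutations) auto
  finally show ?thesis .
qed

lemma finite_cps: "finite (coord_perms m n)"
  unfolding cps_image by (intro finite_imageI finite_permutations) simp

lemma cps_aut: "coord_perms m n \<subseteq> SR_Aut m n"
  using cp_aut by (auto simp: coord_perms_def)

end

context SR begin

lemma swap_not_cp:
  assumes n: "n = 3" and s: "\<sigma> permutes {..<m}" and t: "\<tau> permutes {..<m}"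
    and e: "compose V (coord_perm m n \<sigma>) (swap12 m n) = coord_perm m n \<tau>"
  shows False
proof -
  have st: "\<sigma> = \<tau>"
  proof
    fix i show "\<sigma> i = \<tau> i"
    proof (cases "i < m")
      case True
      have "compose V (coord_perm m n \<sigma>) (swap12 m n) (cor i) = coord_perm m n \<tau> (cor i)" using e by simp
      then have "cor (\<sigma> i) = cor (\<tau> i)"
        using swap12_cor[OF n True] cor_V[OF True] cp_cor[OF s True] cp_cor[OF t True] by (simp add: compose_def)
      then show ?thesis by (rule cor_inj)
    next
      case False then show ?thesis using permutes_not_in[OF s] permutes_not_in[OF t] by simp
    qed
  qed
  have m1: "0 < m" "1 < m" "(0::nat) \<noteq> 1" using m3 by auto
  let ?x = "P 0 1 1"
  have xV: "?x \<in> V" using P_V[OF m1] n by simp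
  have "coord_perm m n \<sigma> (swap12 m n ?x) = coord_perm m n \<sigma> ?x"
    using fun_cong[OF e, of ?x] xV st by (simp add: compose_def)
  then have "coord_perm m n (inv_into UNIV \<sigma>) (coord_perm m n \<sigma> (swap12 m n ?x)) = ?x"
    using cp_inv(1)[OF s xV] by simp
  then have "swap12 m n ?x = ?x" using cp_inv(1)[OF s swap12_V[OF n xV]] by simp
  moreover have "swap12 m n ?x = P 0 1 2" using swap12_P[OF n m1, of 1] n by simp
  ultimately have "P 0 1 2 = P 0 1 1" by simp
  then show False using P_inj[OF m1(3)] by fastforce
qed

lemma comp_swap_inj:
  assumes n: "n = 3"
  shows "inj_on (\<lambda>h. compose V h (swap12 m n)) (coord_perms m n)"
proof (rule inj_onI)
  fix h h' assume h: "h \<in> coord_perms m n" and h': "h' \<in> coord_perms m n"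
    and e: "compose V h (swap12 m n) = compose V h' (swap12 m n)"
  have hA: "h \<in> SR_Aut m n" "h' \<in> SR_Aut m n" using h h' cps_aut by auto
  show "h = h'"
  proof
    fix x show "h x = h' x"
    proof (cases "x \<in> V")
      case True
      have sx: "swap12 m n x \<in> V" using swap12_V[OF n True] .
      have "compose V h (swap12 m n) (swap12 m n x) = compose V h' (swap12 m n) (swap12 m n x)" using e by simp
      then show ?thesis using sx swap12_invol[OF n True] by (simp add: compose_def)
    next
      case False then show ?thesis using aut_ext hA by simp
    qed
  qed
qed

end

theorem proposition7:
  fixes m n :: nat
  assumes "m > 2" and "n > 2"
  shows "(n > 3 \<longrightarrow> SR_Aut m n = coord_perms m n \<and> card (SR_Aut m n) = fact m)
       \<and> (n = 3 \<longrightarrow> SR_Aut m n = generate (BijGroup (SR_verts m n)) (insert (swap12 m n) (coord_perms m n))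
                    \<and> card (SR_Aut m n) = 2 * fact m)"
proof -
  interpret SR m n using assms by unfold_locales
  have p1: "SR_Aut m n = coord_perms m n" if n4: "n > 3"
  proof
    show "SR_Aut m n \<subseteq> coord_perms m n"
    proof
      fix f assume f: "f \<in> SR_Aut m n"
      then obtain \<sigma> where "\<sigma> permutes {..<m}" "f = coord_perm m n \<sigma>" using aut_structure[OF f] n4 by blast
      then show "f \<in> coord_perms m n" by (auto simp: coord_perms_def)
    qed
    show "coord_perms m n \<subseteq> SR_Aut m n" by (rule cps_aut)
  qed
  let ?V = "SR_verts m n"
  let ?s = "swap12 m n"
  let ?C = "coord_perms m n"
  have p3: "SR_Aut m n = ?C \<union> (\<lambda>h. compose ?V h ?s) ` ?C" if n: "n = 3"
  proof
    show "SR_Aut m n \<subseteq> ?C \<union> (\<lambda>h. compose ?V h ?s) ` ?C"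
    proof
      fix f assume f: "f \<in> SR_Aut m n"
      then obtain \<sigma> where s: "\<sigma> permutes {..<m}"
        and "f = coord_perm m n \<sigma> \<or> f = compose ?V (coord_perm m n \<sigma>) ?s" using aut_structure[OF f] n by blast
      then show "f \<in> ?C \<union> (\<lambda>h. compose ?V h ?s) ` ?C" by (auto simp: coord_perms_def)
    qed
    show "?C \<union> (\<lambda>h. compose ?V h ?s) ` ?C \<subseteq> SR_Aut m n"
      using cps_aut aut_compose swap12_aut[OF n] by auto
  qed
  have p4: "SR_Aut m n = generate (BijGroup ?V) (insert ?s ?C)" if n: "n = 3"
  proof
    show "generate (BijGroup ?V) (insert ?s ?C) \<subseteq> SR_Aut m n"
      by (rule group.generate_subgroup_incl[OF group_BijGroup _ aut_subgroup])
         (use cps_aut swap12_aut[OF n] in auto)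
    show "SR_Aut m n \<subseteq> generate (BijGroup ?V) (insert ?s ?C)"
    proof
      fix f assume f: "f \<in> SR_Aut m n"
      then have "f \<in> ?C \<or> (\<exists>h\<in>?C. f = compose ?V h ?s)" using p3[OF n] by auto
      then show "f \<in> generate (BijGroup ?V) (insert ?s ?C)"
      proof
        assume "f \<in> ?C" then show ?thesis by (intro generate.incl) simp
      next
        assume "\<exists>h\<in>?C. f = compose ?V h ?s"
        then obtain h where h: "h \<in> ?C" "f = compose ?V h ?s" by blast
        have "h \<in> Bij ?V" "?s \<in> Bij ?V" using h cps_aut swap12_aut[OF n] by (auto simp: SR_Aut_def)
        then have "f = h \<otimes>\<^bsub>BijGroup ?V\<^esub> ?s" using h by (simp add: BijGroup_def)
        moreover have "h \<in> generate (BijGroup ?V) (insert ?s ?C)" using h by (intro generate.incl) simp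
        moreover have "?s \<in> generate (BijGroup ?V) (insert ?s ?C)" by (intro generate.incl) simp
        ultimately show ?thesis using generate.eng by metis
      qed
    qed
  qed
  have p5: "card (SR_Aut m n) = 2 * fact m" if n: "n = 3"
  proof -
    have disj: "?C \<inter> (\<lambda>h. compose ?V h ?s) ` ?C = {}"
    proof (rule ccontr)
      assume "?C \<inter> (\<lambda>h. compose ?V h ?s) ` ?C \<noteq> {}"
      then obtain \<sigma> \<tau> where "\<sigma> permutes {..<m}" "\<tau> permutes {..<m}"
        "compose ?V (coord_perm m n \<sigma>) ?s = coord_perm m n \<tau>" by (auto simp: coord_perms_def)
      then show False using swap_not_cp[OF n] by blast
    qed
    have "card ((\<lambda>h. compose ?V h ?s) ` ?C) = card ?C" using comp_swap_inj[OF n] by (rule card_image)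
    then have "card (?C \<union> (\<lambda>h. compose ?V h ?s) ` ?C) = card ?C + card ?C"
      using card_Un_disjoint[OF finite_cps finite_imageI[OF finite_cps] disj] by simp
    then show ?thesis using p3[OF n] card_cps by simp
  qed
  show ?thesis using p1 card_cps p4 p5 by auto
qed


end
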